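(* Let $G$ be a finitely generated group and $S$ a finite symmetric generating set, and let $\Sigma(G,S)$ be the Cayley graph with the path metric in which edges have length $1$. Then the number of ends of $G$ (in the sense defined below) equals the cardinality of the space of Freudenthal ends of $\Sigma(G,S)$.
   Context: For a countable group $G$, choose a proper left-invariant metric on $G$ (balls finite, $d(gh_1,gh_2)=d(h_1,h_2)$); $G$ is then a discrete proper metric space. The number of ends of $G$ is the cardinality of $CF(G)\setminus G$, where $CF$ denotes the coarse Freudenthal compactification: for a proper metric space $X$, $CF(X)$ is the compactification induced by all continuous glacially oscillating functions $X\to[0,1]$. Here a glacial scale on $X$ is a sequence $\mathcal S=\{(K_i,n_i)\}_{i\ge1}$, $K_i$ bounded, $n_i\in\mathbb N$, such that for every bounded $K$ and $r>0$ there is $i$ with $K\subset K_i$, $n_i>r$; an $\mathcal S$-chain is a finite sequence $x_1,\dots,x_n$ with, for each $i\le n-1$, some $m$ such that $x_i,x_{i+1}\notin K_m$ and $d(x_i,x_{i+1})\le n_m$; $f$ is glacially oscillating if for every $\epsilon>0$ there is a glacial scale $\mathcal S$ with $|f(x_1)-f(x_n)|<\epsilon$ for all $\mathcal S$-chains. Freudenthal ends of a locally compact, connected, locally connected space $Y$: decreasing sequences $\{U_i\}$ with $U_i$ a component of $Y\setminus K_i$ for an exhaustion by compact sets $K_i\subset\operatorname{int}K_{i+1}$. *)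

theory Defs
  imports "HOL-Analysis.Analysis" "HOL-Algebra.Generated_Groups" "HOL-Library.Equipollence"
begin

definition proper_left_invariant_metric :: "('a, 'b) monoid_scheme \<Rightarrow> ('a \<Rightarrow> 'a \<Rightarrow> real) \<Rightarrow> bool" where
  "proper_left_invariant_metric G d \<longleftrightarrow>
     Metric_space (carrier G) d \<and>
     (\<forall>x\<in>carrier G. \<forall>r. finite {y \<in> carrier G. d x y \<le> r}) \<and>
     (\<forall>g\<in>carrier G. \<forall>h1\<in>carrier G. \<forall>h2\<in>carrier G.
        d (g \<otimes>\<^bsub>G\<^esub> h1) (g \<otimes>\<^bsub>G\<^esub> h2) = d h1 h2)"

definition glacial_scale :: "'a set \<Rightarrow> ('a \<Rightarrow> 'a \<Rightarrow> real) \<Rightarrow> (nat \<Rightarrow> 'a set) \<Rightarrow> (nat \<Rightarrow> nat) \<Rightarrow> bool" where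
  "glacial_scale X d K n \<longleftrightarrow>
     (\<forall>i. K i \<subseteq> X \<and> Metric_space.mbounded X d (K i)) \<and>
     (\<forall>B r. B \<subseteq> X \<and> Metric_space.mbounded X d B \<and> r > 0 \<longrightarrow>
        (\<exists>i. B \<subseteq> K i \<and> real (n i) > r))"

definition scale_chain :: "'a set \<Rightarrow> ('a \<Rightarrow> 'a \<Rightarrow> real) \<Rightarrow> (nat \<Rightarrow> 'a set) \<Rightarrow> (nat \<Rightarrow> nat) \<Rightarrow> 'a list \<Rightarrow> bool" where
  "scale_chain X d K n xs \<longleftrightarrow>
     xs \<noteq> [] \<and> set xs \<subseteq> X \<and>
     (\<forall>i. Suc i < length xs \<longrightarrow>
        (\<exists>m. xs ! i \<notin> K m \<and> xs ! Suc i \<notin> K m \<and> d (xs ! i) (xs ! Suc i) \<le> real (n m)))"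

definition glacially_oscillating :: "'a set \<Rightarrow> ('a \<Rightarrow> 'a \<Rightarrow> real) \<Rightarrow> ('a \<Rightarrow> real) \<Rightarrow> bool" where
  "glacially_oscillating X d f \<longleftrightarrow>
     (\<forall>\<epsilon>>0. \<exists>K n. glacial_scale X d K n \<and>
        (\<forall>xs. scale_chain X d K n xs \<longrightarrow> \<bar>f (hd xs) - f (last xs)\<bar> < \<epsilon>))"

text \<open>X is a discrete space here
  (a group with a proper metric), so continuity is automatic. Functions are normalised
  to be 0 outside X, so that each function on X is represented exactly once.\<close>
definition GO_functions :: "'a set \<Rightarrow> ('a \<Rightarrow> 'a \<Rightarrow> real) \<Rightarrow> ('a \<Rightarrow> real) set" where
  "GO_functions X d = {f. (\<forall>x\<in>X. 0 \<le> f x \<and> f x \<le> 1) \<and> (\<forall>x. x \<notin> X \<longrightarrow> f x = 0)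
                          \<and> glacially_oscillating X d f}"

text \<open>The compactification induced by the family: closure of the image of X under the
  evaluation map into the product [0,1]^F (coordinates outside F are fixed to 0).\<close>
definition CF_embed :: "'a set \<Rightarrow> ('a \<Rightarrow> 'a \<Rightarrow> real) \<Rightarrow> 'a \<Rightarrow> (('a \<Rightarrow> real) \<Rightarrow> real)" where
  "CF_embed X d x = (\<lambda>f. if f \<in> GO_functions X d then f x else 0)"

definition CF_remainder :: "'a set \<Rightarrow> ('a \<Rightarrow> 'a \<Rightarrow> real) \<Rightarrow> (('a \<Rightarrow> real) \<Rightarrow> real) set" where
  "CF_remainder X d = closure (CF_embed X d ` X) - CF_embed X d ` X"

text \<open>Representatives (g, s, t): the point at parameter t \<in> [0,1] on the edge from g to g s.
  The edge (g,s) traversed at t is identified with the edge (g s, s^-1) traversed at 1 - t;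
  endpoints are vertices. Loops (s = 1) are kept as circles.\<close>
definition cayley_point :: "('a, 'b) monoid_scheme \<Rightarrow> 'a \<times> 'a \<times> real \<Rightarrow> 'a + ('a \<times> 'a \<times> real) set" where
  "cayley_point G p = (case p of (g, s, t) \<Rightarrow>
     if t = 0 then Inl g
     else if t = 1 then Inl (g \<otimes>\<^bsub>G\<^esub> s)
     else if s = \<one>\<^bsub>G\<^esub> then Inr {(g, s, t)}
     else Inr {(g, s, t), (g \<otimes>\<^bsub>G\<^esub> s, inv\<^bsub>G\<^esub> s, 1 - t)})"

definition cayley_set :: "('a, 'b) monoid_scheme \<Rightarrow> 'a set \<Rightarrow> ('a + ('a \<times> 'a \<times> real) set) set" where
  "cayley_set G S = {cayley_point G (g, s, t) | g s t. g \<in> carrier G \<and> s \<in> S \<and> t \<in> {0..1}}"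

text \<open>Quotient (CW) topology of the graph: a set is open iff its trace on every closed edge
  is open in [0,1]. For a locally finite graph this is the topology of the path metric
  with edges of length 1.\<close>
definition cayley_top :: "('a, 'b) monoid_scheme \<Rightarrow> 'a set \<Rightarrow> ('a + ('a \<times> 'a \<times> real) set) topology" where
  "cayley_top G S = topology (\<lambda>U. U \<subseteq> cayley_set G S \<and>
     (\<forall>g\<in>carrier G. \<forall>s\<in>S.
        openin (top_of_set {0..1::real}) {t \<in> {0..1}. cayley_point G (g, s, t) \<in> U}))"

definition exhaustion :: "'p topology \<Rightarrow> (nat \<Rightarrow> 'p set) \<Rightarrow> bool" where
  "exhaustion Y K \<longleftrightarrow> (\<forall>i. compactin Y (K i) \<and> K i \<subseteq> Y interior_of (K (Suc i)))
                      \<and> (\<Union>i. K i) = topspace Y"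

definition freudenthal_ends :: "'p topology \<Rightarrow> (nat \<Rightarrow> 'p set) \<Rightarrow> (nat \<Rightarrow> 'p set) set" where
  "freudenthal_ends Y K = {U. \<forall>i. U i \<in> connected_components_of (subtopology Y (topspace Y - K i))
                                 \<and> U (Suc i) \<subseteq> U i}"

end

theory Submission
  imports Defs
begin

locale cay = group G for G :: "('a, 'b) monoid_scheme" (structure) +
  fixes S :: "'a set" and d :: "'a \<Rightarrow> 'a \<Rightarrow> real"
  assumes finS: "finite S" and Ssub: "S \<subseteq> carrier G" and Sinv: "\<forall>s\<in>S. inv s \<in> S"
    and gen: "generate G S = carrier G"
    and plim: "proper_left_invariant_metric G d"
begin

lemma MS: "Metric_space (carrier G) d" using plim by (simp add: proper_left_invariant_metric_def)

lemma dfin: "x \<in> carrier G \<Longrightarrow> finite {y \<in> carrier G. d x y \<le> r}"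
  using plim by (simp add: proper_left_invariant_metric_def)

lemma dinv: "g \<in> carrier G \<Longrightarrow> h1 \<in> carrier G \<Longrightarrow> h2 \<in> carrier G \<Longrightarrow> d (g \<otimes> h1) (g \<otimes> h2) = d h1 h2"
  using plim by (simp add: proper_left_invariant_metric_def)

lemma dnn: "0 \<le> d x y" using Metric_space.nonneg[OF MS] .
lemma dcom: "d x y = d y x" using Metric_space.commute[OF MS] .
lemma dzero: "x \<in> carrier G \<Longrightarrow> d x x = 0" using Metric_space.zero[OF MS] by blast
lemma dtri: "x \<in> carrier G \<Longrightarrow> y \<in> carrier G \<Longrightarrow> z \<in> carrier G \<Longrightarrow> d x z \<le> d x y + d y z"
  using Metric_space.triangle[OF MS] by blast

definition w :: "'a \<Rightarrow> real" where "w x = d \<one> x"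
definition B :: "nat \<Rightarrow> 'a set" where "B n = {g \<in> carrier G. w g \<le> real n}"
definition C :: real where "C = Max (insert 0 ((\<lambda>s. w s) ` S))"
definition E :: "('a \<times> 'a) set" where "E = {(a, a \<otimes> s) | a s. a \<in> carrier G \<and> s \<in> S}"
definition Rn :: "nat \<Rightarrow> ('a \<times> 'a) set" where
  "Rn n = {(a, a \<otimes> s) | a s. a \<in> carrier G \<and> s \<in> S \<and> a \<notin> B n \<and> a \<otimes> s \<notin> B n}"
definition comp :: "nat \<Rightarrow> 'a \<Rightarrow> 'a set" where "comp n x = (Rn n)\<^sup>* `` {x}"
definition comps :: "nat \<Rightarrow> 'a set set" where "comps n = comp n ` (carrier G - B n)"
definition gends :: "(nat \<Rightarrow> 'a set) set" where
  "gends = {W. \<forall>n. W n \<in> comps n \<and> W (Suc n) \<subseteq> W n}"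

lemma Bfin: "finite (B n)"
  using dfin[of \<one> "real n"] by (simp add: B_def w_def)

lemma C_ge: "s \<in> S \<Longrightarrow> w s \<le> C"
  unfolding C_def using finS by (intro Max_ge) auto
lemma C_nn: "0 \<le> C"
  unfolding C_def using finS by (intro Max_ge) auto

lemma w_step: assumes "a \<in> carrier G" "s \<in> S" shows "\<bar>w (a \<otimes> s) - w a\<bar> \<le> C"
proof -
  have s: "s \<in> carrier G" using assms Ssub by auto
  have e: "d a (a \<otimes> s) = w s" using dinv[of a \<one> s] assms s by (simp add: w_def)
  have 1: "w (a \<otimes> s) \<le> w a + d a (a \<otimes> s)" unfolding w_def using dtri assms s by auto
  have 2: "w a \<le> w (a \<otimes> s) + d (a \<otimes> s) a" unfolding w_def using dtri assms s by auto
  show ?thesis using 1 2 e C_ge[OF assms(2)] dcom[of a "a \<otimes> s"] by auto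
qed

lemma one_B: "\<one> \<in> B n" by (simp add: B_def w_def dzero)

lemma Rn_sub_E: "Rn n \<subseteq> E" unfolding Rn_def E_def by auto

lemma Rn_sym: "(x, y) \<in> Rn n \<Longrightarrow> (y, x) \<in> Rn n"
proof -
  assume "(x, y) \<in> Rn n"
  then obtain s where x: "x \<in> carrier G" "s \<in> S" "y = x \<otimes> s" "x \<notin> B n" "x \<otimes> s \<notin> B n"
    unfolding Rn_def by auto
  have s: "s \<in> carrier G" using x Ssub by auto
  have "x = y \<otimes> inv s" using x s by (simp add: m_assoc)
  then show "(y, x) \<in> Rn n" unfolding Rn_def using x Sinv s by auto
qed

lemma Rn_rtr_sym: "(x, y) \<in> (Rn n)\<^sup>* \<Longrightarrow> (y, x) \<in> (Rn n)\<^sup>*"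
proof (induction rule: rtrancl_induct)
  case base then show ?case by simp
next
  case (step y z) then show ?case using Rn_sym by (meson converse_rtrancl_into_rtrancl)
qed

lemma Rn_carrier: "(x, y) \<in> Rn n \<Longrightarrow> x \<in> carrier G - B n \<and> y \<in> carrier G - B n"
  unfolding Rn_def using Ssub by auto

lemma Rn_rtr_carrier: "(x, y) \<in> (Rn n)\<^sup>* \<Longrightarrow> x \<in> carrier G - B n \<Longrightarrow> y \<in> carrier G - B n"
  by (induction rule: rtrancl_induct) (auto dest: Rn_carrier)

lemma Rn_mono: "m \<le> n \<Longrightarrow> Rn n \<subseteq> Rn m"
proof
  fix p assume "m \<le> n" "p \<in> Rn n"
  then obtain a s where "p = (a, a \<otimes> s)" "a \<in> carrier G" "s \<in> S" "a \<notin> B n" "a \<otimes> s \<notin> B n"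
    unfolding Rn_def by blast
  moreover have "a \<notin> B m" "a \<otimes> s \<notin> B m" using calculation \<open>m \<le> n\<close> unfolding B_def by auto
  ultimately show "p \<in> Rn m" unfolding Rn_def by blast
qed

lemma comp_sub: "x \<in> carrier G - B n \<Longrightarrow> comp n x \<subseteq> carrier G - B n"
  unfolding comp_def using Rn_rtr_carrier by auto

lemma comp_self: "x \<in> comp n x" unfolding comp_def by auto

lemma comp_eq: "y \<in> comp n x \<Longrightarrow> comp n y = comp n x"
  unfolding comp_def using Rn_rtr_sym by (auto intro: rtrancl_trans)

lemma comps_disj: "W \<in> comps n \<Longrightarrow> W' \<in> comps n \<Longrightarrow> W \<inter> W' \<noteq> {} \<Longrightarrow> W = W'"
proof -
  assume a: "W \<in> comps n" "W' \<in> comps n" "W \<inter> W' \<noteq> {}"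
  then obtain x x' z where "W = comp n x" "W' = comp n x'" "z \<in> W" "z \<in> W'"
    unfolding comps_def by blast
  then show "W = W'" using comp_eq by metis
qed

lemma comps_sub: "W \<in> comps n \<Longrightarrow> W \<subseteq> carrier G - B n"
  unfolding comps_def using comp_sub by auto

lemma comps_ne: "W \<in> comps n \<Longrightarrow> W \<noteq> {}"
  unfolding comps_def using comp_self by auto

lemma comps_closed: "W \<in> comps n \<Longrightarrow> x \<in> W \<Longrightarrow> (x, y) \<in> Rn n \<Longrightarrow> y \<in> W"
  unfolding comps_def comp_def by (auto intro: rtrancl_into_rtrancl)

lemma comps_closed_rtr: "W \<in> comps n \<Longrightarrow> x \<in> W \<Longrightarrow> (x, y) \<in> (Rn n)\<^sup>* \<Longrightarrow> y \<in> W"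
  unfolding comps_def comp_def by (auto intro: rtrancl_trans)

lemma comps_connected: "W \<in> comps n \<Longrightarrow> x \<in> W \<Longrightarrow> y \<in> W \<Longrightarrow> (x, y) \<in> (Rn n)\<^sup>*"
  unfolding comps_def comp_def using Rn_rtr_sym by (auto intro: rtrancl_trans)

lemma comps_mono: assumes "m \<le> n" "W \<in> comps n" shows "\<exists>W'\<in>comps m. W \<subseteq> W'"
proof -
  obtain x where x: "x \<in> carrier G - B n" "W = comp n x" using assms unfolding comps_def by auto
  have xm: "x \<in> carrier G - B m" using x assms(1) unfolding B_def by auto
  have "W \<subseteq> comp m x" unfolding x comp_def using rtrancl_mono[OF Rn_mono[OF assms(1)]] by auto
  then show ?thesis using xm unfolding comps_def by auto
qed

lemma comps_mono_unique: assumes "m \<le> n" "W \<in> comps n" "W' \<in> comps m" "W \<inter> W' \<noteq> {}"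
  shows "W \<subseteq> W'"
proof -
  obtain W'' where "W'' \<in> comps m" "W \<subseteq> W''" using comps_mono assms by blast
  moreover have "W'' = W'" using comps_disj[OF \<open>W'' \<in> comps m\<close> assms(3)] calculation assms(4) by blast
  ultimately show ?thesis by simp
qed


definition EF :: "'a set \<Rightarrow> ('a \<times> 'a) set" where
  "EF F = {(a, a \<otimes> s) | a s. a \<in> F \<and> s \<in> S \<and> a \<otimes> s \<in> F}"

lemma EF_I: "a \<in> F \<Longrightarrow> s \<in> S \<Longrightarrow> a \<otimes> s \<in> F \<Longrightarrow> (a, a \<otimes> s) \<in> EF F"
  unfolding EF_def by blast

lemma EF_mono: "F \<subseteq> F' \<Longrightarrow> EF F \<subseteq> EF F'"
  unfolding EF_def by blast

lemma EF_rtr_mono: "F \<subseteq> F' \<Longrightarrow> p \<in> (EF F)\<^sup>* \<Longrightarrow> p \<in> (EF F')\<^sup>*"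
proof -
  assume a: "F \<subseteq> F'" "p \<in> (EF F)\<^sup>*"
  show ?thesis using rtrancl_mono[OF EF_mono[OF a(1)]] a(2) by (rule subsetD)
qed

lemma EF_translate:
  assumes c: "c \<in> carrier G" and F: "F \<subseteq> carrier G" and p: "(a, b) \<in> (EF F)\<^sup>*"
  shows "(c \<otimes> a, c \<otimes> b) \<in> (EF ((\<otimes>) c ` F))\<^sup>*"
  using p
proof (induction rule: rtrancl_induct)
  case base then show ?case by simp
next
  case (step y z)
  then obtain s where s: "y \<in> F" "s \<in> S" "y \<otimes> s \<in> F" "z = y \<otimes> s" unfolding EF_def by blast
  have "s \<in> carrier G" using s Ssub by auto
  then have e: "c \<otimes> z = (c \<otimes> y) \<otimes> s" using s c F by (simp add: m_assoc subsetD)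
  have "(c \<otimes> y, (c \<otimes> y) \<otimes> s) \<in> EF ((\<otimes>) c ` F)"
  proof (rule EF_I)
    show "c \<otimes> y \<in> (\<otimes>) c ` F" using s by blast
    show "s \<in> S" using s by blast
    have "c \<otimes> (y \<otimes> s) \<in> (\<otimes>) c ` F" using s by blast
    then show "c \<otimes> y \<otimes> s \<in> (\<otimes>) c ` F" by (simp only: e[symmetric] s(4))
  qed
  then have "(c \<otimes> y, c \<otimes> z) \<in> EF ((\<otimes>) c ` F)" using e by simp
  then show ?case using step.IH by (rule rtrancl_into_rtrancl[rotated])
qed

lemma fin_path: "g \<in> generate G S \<Longrightarrow> \<exists>F. finite F \<and> F \<subseteq> carrier G \<and> \<one> \<in> F \<and> g \<in> F \<and> (\<one>, g) \<in> (EF F)\<^sup>*"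
proof (induction rule: generate.induct)
  case one
  have "finite {\<one>} \<and> {\<one>} \<subseteq> carrier G \<and> \<one> \<in> {\<one>} \<and> \<one> \<in> {\<one>} \<and> (\<one>, \<one>) \<in> (EF {\<one>})\<^sup>*" by simp
  then show ?case by blast
next
  case (incl h)
  have h: "h \<in> carrier G" using incl Ssub by auto
  have "(\<one>, \<one> \<otimes> h) \<in> EF {\<one>, h}" using EF_I[of \<one> "{\<one>, h}" h] incl h by simp
  then have "(\<one>, h) \<in> (EF {\<one>, h})\<^sup>*" using h by auto
  then have "finite {\<one>, h} \<and> {\<one>, h} \<subseteq> carrier G \<and> \<one> \<in> {\<one>, h} \<and> h \<in> {\<one>, h} \<and> (\<one>, h) \<in> (EF {\<one>, h})\<^sup>*" using h by simp
  then show ?case by blast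
next
  case (inv h)
  have h: "inv h \<in> carrier G" "inv h \<in> S" using inv Ssub Sinv by auto
  have "(\<one>, \<one> \<otimes> inv h) \<in> EF {\<one>, inv h}" using EF_I[of \<one> "{\<one>, inv h}" "inv h"] h by simp
  then have "(\<one>, inv h) \<in> (EF {\<one>, inv h})\<^sup>*" using h by auto
  then have "finite {\<one>, inv h} \<and> {\<one>, inv h} \<subseteq> carrier G \<and> \<one> \<in> {\<one>, inv h} \<and> inv h \<in> {\<one>, inv h} \<and> (\<one>, inv h) \<in> (EF {\<one>, inv h})\<^sup>*" using h by simp
  then show ?case by blast
next
  case (eng h1 h2)
  obtain F1 where F1: "finite F1" "F1 \<subseteq> carrier G" "\<one> \<in> F1" "h1 \<in> F1" "(\<one>, h1) \<in> (EF F1)\<^sup>*"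
    using eng by blast
  obtain F2 where F2: "finite F2" "F2 \<subseteq> carrier G" "\<one> \<in> F2" "h2 \<in> F2" "(\<one>, h2) \<in> (EF F2)\<^sup>*"
    using eng by blast
  have h1: "h1 \<in> carrier G" using F1 by auto
  have t: "(h1 \<otimes> \<one>, h1 \<otimes> h2) \<in> (EF ((\<otimes>) h1 ` F2))\<^sup>*"
    using EF_translate[OF h1 F2(2) F2(5)] .
  let ?F = "F1 \<union> (\<otimes>) h1 ` F2"
  have a: "(\<one>, h1) \<in> (EF ?F)\<^sup>*" by (rule EF_rtr_mono[OF _ F1(5)]) blast
  have b0: "(h1 \<otimes> \<one>, h1 \<otimes> h2) \<in> (EF ?F)\<^sup>*" by (rule EF_rtr_mono[OF _ t]) blast
  have b: "(h1, h1 \<otimes> h2) \<in> (EF ?F)\<^sup>*" using b0 h1 by simp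
  have ab: "(\<one>, h1 \<otimes> h2) \<in> (EF ?F)\<^sup>*" using a b by (rule rtrancl_trans)
  have "?F \<subseteq> carrier G" using F1 F2 h1 by auto
  moreover have "h1 \<otimes> h2 \<in> ?F" using F2 by blast
  moreover have "finite ?F" using F1 F2 by blast
  moreover have "\<one> \<in> ?F" using F1 by blast
  ultimately show ?case using ab by blast
qed

lemma fin_path': "g \<in> carrier G \<Longrightarrow> \<exists>F. finite F \<and> F \<subseteq> carrier G \<and> \<one> \<in> F \<and> g \<in> F \<and> (\<one>, g) \<in> (EF F)\<^sup>*"
  using fin_path gen by blast

lemma EF_sub_E: "F \<subseteq> carrier G \<Longrightarrow> EF F \<subseteq> E"
  unfolding EF_def E_def by blast

lemma E_reach: "g \<in> carrier G \<Longrightarrow> (\<one>, g) \<in> E\<^sup>*"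
proof -
  assume g: "g \<in> carrier G"
  obtain F where F: "F \<subseteq> carrier G" "(\<one>, g) \<in> (EF F)\<^sup>*" using fin_path'[OF g] by blast
  show ?thesis using rtrancl_mono[OF EF_sub_E[OF F(1)]] F(2) by (rule subsetD)
qed

definition bdry :: "nat \<Rightarrow> 'a set" where "bdry n = (\<lambda>(a, s). a \<otimes> s) ` (B n \<times> S)"

lemma bdry_fin: "finite (bdry n)" unfolding bdry_def using Bfin finS by auto

lemma reach_out_aux: "(a, x) \<in> E\<^sup>* \<Longrightarrow> x \<notin> B n \<Longrightarrow>
   (a \<notin> B n \<and> (a, x) \<in> (Rn n)\<^sup>*) \<or> (\<exists>y\<in>bdry n. y \<notin> B n \<and> (y, x) \<in> (Rn n)\<^sup>*)"
proof (induction arbitrary: rule: rtrancl_induct)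
  case base then show ?case by simp
next
  case (step y z)
  then obtain s where s: "y \<in> carrier G" "s \<in> S" "z = y \<otimes> s" unfolding E_def by blast
  show ?case
  proof (cases "y \<in> B n")
    case True
    then have "z \<in> bdry n" unfolding bdry_def using s by auto
    then show ?thesis using step.prems by blast
  next
    case False
    then have "(y, z) \<in> Rn n" unfolding Rn_def using s step by auto
    then show ?thesis using step.IH False by (meson rtrancl_into_rtrancl)
  qed
qed

lemma reach_out: "x \<in> carrier G - B n \<Longrightarrow> \<exists>y\<in>bdry n. y \<notin> B n \<and> (y, x) \<in> (Rn n)\<^sup>*"
proof -
  assume x: "x \<in> carrier G - B n"
  have "(\<one>, x) \<in> E\<^sup>*" using E_reach x by blast
  from reach_out_aux[OF this] x one_B show ?thesis by blast
qed

lemma comps_fin: "finite (comps n)"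
proof -
  have "comps n \<subseteq> comp n ` bdry n"
  proof
    fix W assume "W \<in> comps n"
    then obtain x where x: "x \<in> carrier G - B n" "W = comp n x" unfolding comps_def by auto
    obtain y where "y \<in> bdry n" "(y, x) \<in> (Rn n)\<^sup>*" using reach_out[OF x(1)] by auto
    then have "comp n x = comp n y" using comp_eq unfolding comp_def by auto
    then show "W \<in> comp n ` bdry n" using x \<open>y \<in> bdry n\<close> by auto
  qed
  then show ?thesis using bdry_fin finite_subset by blast
qed

lemma carrier_cover: "carrier G = B n \<union> \<Union>(comps n)"
proof -
  have "\<Union>(comps n) \<subseteq> carrier G" using comps_sub by blast
  moreover have "carrier G - B n \<subseteq> \<Union>(comps n)" unfolding comps_def using comp_self by blast
  moreover have "B n \<subseteq> carrier G" unfolding B_def by auto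
  ultimately show ?thesis by blast
qed

lemma w_tri: "x \<in> carrier G \<Longrightarrow> v \<in> carrier G \<Longrightarrow> w x \<le> w v + d x v"
  unfolding w_def using dtri[of \<one> v x] dcom[of v x] by auto

lemma d_w: "x \<in> carrier G \<Longrightarrow> f \<in> carrier G \<Longrightarrow> d x (x \<otimes> f) = w f"
  unfolding w_def using dinv[of x \<one> f] by simp

lemma coarse_conn: "\<exists>L\<ge>0. \<forall>x\<in>carrier G. \<forall>y\<in>carrier G. d x y \<le> r \<longrightarrow>
     (\<forall>n. w x > real n + L \<longrightarrow> (x, y) \<in> (Rn n)\<^sup>*)"
proof -
  define H where "H = {h \<in> carrier G. w h \<le> r}"
  have Hfin: "finite H" unfolding H_def w_def using dfin by simp
  have "\<forall>h\<in>H. \<exists>F. finite F \<and> F \<subseteq> carrier G \<and> \<one> \<in> F \<and> h \<in> F \<and> (\<one>, h) \<in> (EF F)\<^sup>*"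
    using fin_path' H_def by auto
  then obtain FF where FF: "\<And>h. h \<in> H \<Longrightarrow> finite (FF h) \<and> FF h \<subseteq> carrier G \<and> \<one> \<in> FF h \<and> h \<in> FF h \<and> (\<one>, h) \<in> (EF (FF h))\<^sup>*"
    by metis
  define L where "L = Max (insert 0 (w ` (\<Union>h\<in>H. FF h)))"
  have finU: "finite (\<Union>h\<in>H. FF h)" using Hfin FF by auto
  have L0: "L \<ge> 0" unfolding L_def using finU by (intro Max_ge) auto
  have Lge: "\<And>h f. h \<in> H \<Longrightarrow> f \<in> FF h \<Longrightarrow> w f \<le> L" unfolding L_def using finU by (intro Max_ge) auto
  have "\<forall>x\<in>carrier G. \<forall>y\<in>carrier G. d x y \<le> r \<longrightarrow> (\<forall>n. w x > real n + L \<longrightarrow> (x, y) \<in> (Rn n)\<^sup>*)"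
  proof (intro ballI impI allI)
    fix x y n assume x: "x \<in> carrier G" and y: "y \<in> carrier G" and dxy: "d x y \<le> r" and wx: "w x > real n + L"
    define h where "h = inv x \<otimes> y"
    have hc: "h \<in> carrier G" using x y h_def by auto
    have xh: "x \<otimes> h = y" using x y h_def by (simp add: m_assoc[symmetric])
    have "w h = d x y" using d_w[OF x hc] xh by simp
    then have hH: "h \<in> H" using H_def hc dxy by auto
    have Fh: "finite (FF h)" "FF h \<subseteq> carrier G" "(\<one>, h) \<in> (EF (FF h))\<^sup>*" using FF[OF hH] by auto
    have p: "(x \<otimes> \<one>, x \<otimes> h) \<in> (EF ((\<otimes>) x ` FF h))\<^sup>*" using EF_translate[OF x Fh(2) Fh(3)] .
    have sub: "EF ((\<otimes>) x ` FF h) \<subseteq> Rn n"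
    proof
      fix p assume "p \<in> EF ((\<otimes>) x ` FF h)"
      then obtain a s where a: "p = (a, a \<otimes> s)" "a \<in> (\<otimes>) x ` FF h" "s \<in> S" "a \<otimes> s \<in> (\<otimes>) x ` FF h"
        unfolding EF_def by blast
      have out: "v \<notin> B n" if vin: "v \<in> (\<otimes>) x ` FF h" for v
      proof -
        obtain f where f: "f \<in> FF h" "v = x \<otimes> f" using vin by blast
        have fc: "f \<in> carrier G" using f Fh by auto
        have "w x \<le> w v + d x v" using w_tri[of x v] x fc f by auto
        moreover have "d x v = w f" using d_w[OF x fc] f by simp
        moreover have "w f \<le> L" using Lge[OF hH f(1)] .
        ultimately show ?thesis using wx unfolding B_def by auto
      qed
      have "a \<in> carrier G" using a(2) Fh x by auto
      then show "p \<in> Rn n" unfolding Rn_def using a out by blast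
    qed
    show "(x, y) \<in> (Rn n)\<^sup>*" using rtrancl_mono[OF sub] p x xh by auto
  qed
  then show ?thesis using L0 by blast
qed

end

lemma closed_coord: "closed (Z::'y::topological_space set) \<Longrightarrow> closed {r::'x \<Rightarrow> 'y. r f \<in> Z}"
proof -
  assume Z: "closed Z"
  have "closed ((\<lambda>r::'x \<Rightarrow> 'y. r f) -` Z \<inter> UNIV)"
    using continuous_on_closed_vimage[of UNIV "\<lambda>r::'x \<Rightarrow> 'y. r f"] continuous_on_product_coordinates[of f] Z
    by blast
  then show ?thesis by (simp add: vimage_def)
qed

lemma closure_coord: "p \<in> closure A \<Longrightarrow> (\<And>a. a \<in> A \<Longrightarrow> a f \<in> Z) \<Longrightarrow> closed Z \<Longrightarrow> p f \<in> (Z::'y::topological_space set)"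
proof -
  assume p: "p \<in> closure A" and a: "\<And>a. a \<in> A \<Longrightarrow> a f \<in> Z" and Z: "closed Z"
  have "closure A \<subseteq> {r. r f \<in> Z}" by (rule closure_minimal) (use a closed_coord[OF Z] in auto)
  then show ?thesis using p by auto
qed

lemma closed_singleton_fun: "closed {a::'x \<Rightarrow> 'y::t1_space}"
proof -
  have "{a} = (\<Inter>f. {r::'x \<Rightarrow> 'y. r f \<in> {a f}})" by auto
  moreover have "closed (\<Inter>f. {r::'x \<Rightarrow> 'y. r f \<in> {a f}})" by (intro closed_INT ballI closed_coord) auto
  ultimately show ?thesis by simp
qed

lemma closed_finite_fun: "finite (A::('x \<Rightarrow> 'y::t1_space) set) \<Longrightarrow> closed A"
proof (induction rule: finite_induct)
  case empty then show ?case by simp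
next
  case (insert a F)
  have "closed ({a} \<union> F)" using closed_singleton_fun insert.IH by (rule closed_Un)
  then show ?case by simp
qed

lemma closure_finite_Union: "finite FF \<Longrightarrow> closure (\<Union>FF) = \<Union>(closure ` FF)"
  by (induction rule: finite_induct) auto

lemma closure_fun_intro:
  fixes p :: "'x \<Rightarrow> real"
  assumes H: "\<And>F e. finite F \<Longrightarrow> e > 0 \<Longrightarrow> \<exists>a\<in>A. \<forall>f\<in>F. \<bar>a f - p f\<bar> < e"
  shows "p \<in> closure A"
  unfolding closure_iff_nhds_not_empty
proof (intro allI impI)
  fix U T assume TU: "T \<subseteq> U" and T: "open T" and pT: "p \<in> T"
  have "openin (product_topology (\<lambda>i. euclidean) UNIV) T" using T by (simp add: open_fun_def)
  from product_topology_open_contains_basis[OF this pT]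
  obtain X where X: "p \<in> (\<Pi>\<^sub>E i\<in>UNIV. X i)" "\<And>i. open (X i)" "finite {i. X i \<noteq> UNIV}"
      "(\<Pi>\<^sub>E i\<in>UNIV. X i) \<subseteq> T" by auto
  define F where "F = {i. X i \<noteq> UNIV}"
  have "\<forall>i\<in>F. \<exists>e>0. ball (p i) e \<subseteq> X i"
  proof
    fix i assume "i \<in> F"
    have "p i \<in> X i" using X(1) by (simp add: PiE_iff)
    then show "\<exists>e>0. ball (p i) e \<subseteq> X i" using open_contains_ball_eq[OF X(2)] by blast
  qed
  then obtain ee where ee: "\<And>i. i \<in> F \<Longrightarrow> ee i > 0 \<and> ball (p i) (ee i) \<subseteq> X i" by metis
  define e where "e = Min (insert 1 (ee ` F))"
  have finF: "finite F" using X(3) F_def by simp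
  have e0: "e > 0" unfolding e_def using finF ee by (subst Min_gr_iff) auto
  have ele: "\<And>i. i \<in> F \<Longrightarrow> e \<le> ee i" unfolding e_def using finF by (intro Min_le) auto
  obtain a where a: "a \<in> A" "\<forall>f\<in>F. \<bar>a f - p f\<bar> < e" using H[OF finF e0] by blast
  have "a \<in> (\<Pi>\<^sub>E i\<in>UNIV. X i)"
  proof (simp add: PiE_iff, intro allI)
    fix i show "a i \<in> X i"
    proof (cases "i \<in> F")
      case True
      then have "\<bar>a i - p i\<bar> < ee i" using a ele[OF True] by fastforce
      then have "a i \<in> ball (p i) (ee i)" by (simp add: dist_real_def abs_minus_commute)
      then show ?thesis using ee[OF True] by blast
    next
      case False then show ?thesis unfolding F_def by auto
    qed
  qed
  then show "A \<inter> U \<noteq> {}" using a X(4) TU by blast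
qed

context cay begin

abbreviation "emb \<equiv> CF_embed (carrier G) d"
abbreviation "GO \<equiv> GO_functions (carrier G) d"
abbreviation "rem \<equiv> CF_remainder (carrier G) d"

definition ind :: "'a set \<Rightarrow> 'a \<Rightarrow> real" where "ind W x = (if x \<in> W then 1 else 0)"

lemma scale_chain_single: "x \<in> X \<Longrightarrow> scale_chain X dd K nn [x]"
  unfolding scale_chain_def by auto

lemma scale_chain_snoc:
  assumes "scale_chain X dd K nn xs" "z \<in> X" "\<exists>m. last xs \<notin> K m \<and> z \<notin> K m \<and> dd (last xs) z \<le> real (nn m)"
  shows "scale_chain X dd K nn (xs @ [z])"
proof -
  have ne: "xs \<noteq> []" using assms(1) unfolding scale_chain_def by auto
  have lastx: "last xs = xs ! (length xs - 1)" using ne by (simp add: last_conv_nth)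
  show ?thesis unfolding scale_chain_def
  proof (intro conjI allI impI)
    show "xs @ [z] \<noteq> []" by simp
    show "set (xs @ [z]) \<subseteq> X" using assms unfolding scale_chain_def by auto
    fix i assume i: "Suc i < length (xs @ [z])"
    show "\<exists>m. (xs @ [z]) ! i \<notin> K m \<and> (xs @ [z]) ! Suc i \<notin> K m \<and> dd ((xs @ [z]) ! i) ((xs @ [z]) ! Suc i) \<le> real (nn m)"
    proof (cases "Suc i < length xs")
      case True
      obtain m where m: "xs ! i \<notin> K m" "xs ! Suc i \<notin> K m" "dd (xs ! i) (xs ! Suc i) \<le> real (nn m)"
        using assms(1) True unfolding scale_chain_def by blast
      have "(xs @ [z]) ! i = xs ! i" "(xs @ [z]) ! Suc i = xs ! Suc i" using True by (auto simp: nth_append)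
      then show ?thesis using m by metis
    next
      case False
      then have "i = length xs - 1" "Suc i = length xs" using i ne by auto
      then have "(xs @ [z]) ! i = last xs" "(xs @ [z]) ! Suc i = z" using lastx ne by (auto simp: nth_append)
      then show ?thesis using assms(3) by metis
    qed
  qed
qed

lemma scale_chain_const:
  assumes "scale_chain X dd K nn xs"
    and "\<And>x y m. x \<in> X \<Longrightarrow> y \<in> X \<Longrightarrow> x \<notin> K m \<Longrightarrow> y \<notin> K m \<Longrightarrow> dd x y \<le> real (nn m) \<Longrightarrow> f x = f y"
  shows "f (hd xs) = f (last xs)"
proof -
  have ne: "xs \<noteq> []" and sub: "set xs \<subseteq> X" using assms(1) unfolding scale_chain_def by auto
  have "\<forall>j. j < length xs \<longrightarrow> f (xs ! j) = f (xs ! 0)"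
  proof (intro allI)
    fix j show "j < length xs \<longrightarrow> f (xs ! j) = f (xs ! 0)"
    proof (induction j)
      case 0 then show ?case by simp
    next
      case (Suc j)
      show ?case
      proof
        assume j: "Suc j < length xs"
        obtain m where m: "xs ! j \<notin> K m" "xs ! Suc j \<notin> K m" "dd (xs ! j) (xs ! Suc j) \<le> real (nn m)"
          using assms(1) j unfolding scale_chain_def by blast
        have "xs ! j \<in> X" "xs ! Suc j \<in> X" using sub j by auto
        then have "f (xs ! j) = f (xs ! Suc j)" using assms(2) m by blast
        then show "f (xs ! Suc j) = f (xs ! 0)" using Suc j by simp
      qed
    qed
  qed
  then have "length xs - 1 < length xs \<longrightarrow> f (xs ! (length xs - 1)) = f (xs ! 0)" by (rule spec)
  then have "f (xs ! (length xs - 1)) = f (xs ! 0)" using ne by simp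
  then show ?thesis using ne by (simp add: hd_conv_nth last_conv_nth)
qed


lemma mbounded_iff: "Metric_space.mbounded (carrier G) d A \<longleftrightarrow> (\<exists>x R. A \<subseteq> {y. x \<in> carrier G \<and> y \<in> carrier G \<and> d x y \<le> R})"
  by (simp add: Metric_space.mbounded_def[OF MS] Metric_space.mcball_def[OF MS])

lemma B_sub: "B n \<subseteq> carrier G" unfolding B_def by auto

lemma B_mono: "m \<le> n \<Longrightarrow> B m \<subseteq> B n" unfolding B_def by auto

lemma mbounded_B: "Metric_space.mbounded (carrier G) d (B n)"
  unfolding mbounded_iff B_def w_def by (rule exI[of _ \<one>], rule exI[of _ "real n"]) auto

lemma mbounded_in_B: assumes "Metric_space.mbounded (carrier G) d A"
  shows "\<exists>N. \<forall>n\<ge>N. A \<subseteq> B n"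
proof -
  obtain x0 R where xr: "A \<subseteq> {y. x0 \<in> carrier G \<and> y \<in> carrier G \<and> d x0 y \<le> R}"
    using assms mbounded_iff by blast
  define N where "N = nat \<lceil>w x0 + R\<rceil>"
  have "A \<subseteq> B n" if "n \<ge> N" for n
  proof
    fix y assume y: "y \<in> A"
    then have x0: "x0 \<in> carrier G" and yc: "y \<in> carrier G" and dy: "d x0 y \<le> R" using xr by auto
    have "w y \<le> w x0 + d y x0" using w_tri[OF yc x0] .
    also have "\<dots> \<le> w x0 + R" using dy dcom[of y x0] by simp
    also have "\<dots> \<le> real N" unfolding N_def by linarith
    also have "\<dots> \<le> real n" using that by simp
    finally show "y \<in> B n" unfolding B_def using yc by simp
  qed
  then show ?thesis by blast
qed

lemma go_const:
  assumes go: "glacially_oscillating (carrier G) d f" and e: "e > 0"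
  shows "\<exists>N. \<forall>n\<ge>N. \<forall>W\<in>comps n. \<forall>x\<in>W. \<forall>y\<in>W. \<bar>f x - f y\<bar> < e"
proof -
  obtain K nn where gs: "glacial_scale (carrier G) d K nn"
    and ch: "\<And>xs. scale_chain (carrier G) d K nn xs \<Longrightarrow> \<bar>f (hd xs) - f (last xs)\<bar> < e"
    using go e unfolding glacially_oscillating_def by blast
  have mb1: "Metric_space.mbounded (carrier G) d {\<one>}"
    unfolding mbounded_iff by (rule exI[of _ \<one>], rule exI[of _ 0]) (auto simp: dzero)
  have C1: "C + 1 > 0" using C_nn by simp
  obtain i where i: "{\<one>} \<subseteq> K i" "real (nn i) > C + 1"
    using gs mb1 C1 unfolding glacial_scale_def by blast
  have Ki: "Metric_space.mbounded (carrier G) d (K i)" using gs unfolding glacial_scale_def by blast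
  obtain N where N: "\<And>n. n \<ge> N \<Longrightarrow> K i \<subseteq> B n" using mbounded_in_B[OF Ki] by blast
  have "\<forall>n\<ge>N. \<forall>W\<in>comps n. \<forall>x\<in>W. \<forall>y\<in>W. \<bar>f x - f y\<bar> < e"
  proof (intro allI impI ballI)
    fix n W x y assume n: "n \<ge> N" and W: "W \<in> comps n" and x: "x \<in> W" and y: "y \<in> W"
    have xc: "x \<in> carrier G" using comps_sub[OF W] x by auto
    have "(x, y) \<in> (Rn n)\<^sup>*" using comps_connected[OF W x y] .
    then have "\<exists>xs. scale_chain (carrier G) d K nn xs \<and> hd xs = x \<and> last xs = y"
    proof (induction rule: rtrancl_induct)
      case base then show ?case using scale_chain_single[OF xc] by fastforce
    next
      case (step u v)
      then obtain xs where xs: "scale_chain (carrier G) d K nn xs" "hd xs = x" "last xs = u" by blast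
      obtain s where s: "u \<in> carrier G" "s \<in> S" "v = u \<otimes> s" "u \<notin> B n" "u \<otimes> s \<notin> B n"
        using step(2) unfolding Rn_def by blast
      have sc: "s \<in> carrier G" using s Ssub by auto
      have "d u v = w s" using d_w[OF s(1) sc] s by simp
      then have duv: "d u v \<le> real (nn i)" using C_ge[OF s(2)] i(2) by simp
      have "u \<notin> K i" "v \<notin> K i" using N[OF n] s by auto
      then have "scale_chain (carrier G) d K nn (xs @ [v])"
        using scale_chain_snoc[OF xs(1), of v] xs(3) duv s sc by auto
      moreover have "hd (xs @ [v]) = x" using xs unfolding scale_chain_def by auto
      ultimately show ?case by (intro exI[of _ "xs @ [v]"]) simp
    qed
    then show "\<bar>f x - f y\<bar> < e" using ch by blast
  qed
  then show ?thesis by blast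
qed

lemma ind_GO: assumes W: "W \<in> comps n" shows "ind W \<in> GO"
proof -
  have "\<forall>r. \<exists>L\<ge>0. \<forall>x\<in>carrier G. \<forall>y\<in>carrier G. d x y \<le> r \<longrightarrow> (\<forall>n. w x > real n + L \<longrightarrow> (x, y) \<in> (Rn n)\<^sup>*)"
    using coarse_conn by blast
  from choice[OF this] obtain Lf where Lf: "\<And>r. Lf r \<ge> 0"
    "\<And>r x y n. x \<in> carrier G \<Longrightarrow> y \<in> carrier G \<Longrightarrow> d x y \<le> r \<Longrightarrow> w x > real n + Lf r \<Longrightarrow> (x, y) \<in> (Rn n)\<^sup>*"
    by blast
  define M where "M i = n + i + nat \<lceil>Lf (real i)\<rceil>" for i
  define K where "K i = B (M i)" for i
  have gs: "glacial_scale (carrier G) d K (\<lambda>i. i)"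
    unfolding glacial_scale_def
  proof (intro conjI allI impI)
    fix i show "K i \<subseteq> carrier G" unfolding K_def by (rule B_sub)
    show "Metric_space.mbounded (carrier G) d (K i)" unfolding K_def by (rule mbounded_B)
  next
    fix A r assume A: "A \<subseteq> carrier G \<and> Metric_space.mbounded (carrier G) d A \<and> (r::real) > 0"
    obtain N where N: "\<And>n. n \<ge> N \<Longrightarrow> A \<subseteq> B n" using mbounded_in_B A by blast
    define i where "i = N + nat \<lceil>r\<rceil> + 1"
    have "M i \<ge> N" unfolding M_def i_def by simp
    then have "A \<subseteq> K i" using N unfolding K_def by blast
    moreover have "real i > r" unfolding i_def by linarith
    ultimately show "\<exists>i. A \<subseteq> K i \<and> real i > r" by blast
  qed
  have const: "ind W x = ind W y" if "x \<in> carrier G" "y \<in> carrier G" "x \<notin> K m" "y \<notin> K m" "d x y \<le> real m" for x y m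
  proof -
    have "w x > real (M m)" using that unfolding K_def B_def by auto
    moreover have "real (M m) \<ge> real n + Lf (real m)" unfolding M_def by linarith
    ultimately have "(x, y) \<in> (Rn n)\<^sup>*" using Lf(2)[OF that(1,2) that(5)] by simp
    then have "x \<in> W \<longleftrightarrow> y \<in> W" using comps_closed_rtr[OF W] Rn_rtr_sym by blast
    then show ?thesis unfolding ind_def by simp
  qed
  have go: "glacially_oscillating (carrier G) d (ind W)"
    unfolding glacially_oscillating_def
  proof (intro allI impI)
    fix e :: real assume e: "e > 0"
    have "\<forall>xs. scale_chain (carrier G) d K (\<lambda>i. i) xs \<longrightarrow> \<bar>ind W (hd xs) - ind W (last xs)\<bar> < e"
    proof (intro allI impI)
      fix xs assume "scale_chain (carrier G) d K (\<lambda>i. i) xs"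
      from scale_chain_const[OF this, of "ind W"] const have "ind W (hd xs) = ind W (last xs)" by blast
      then show "\<bar>ind W (hd xs) - ind W (last xs)\<bar> < e" using e by simp
    qed
    then show "\<exists>K nn. glacial_scale (carrier G) d K nn \<and> (\<forall>xs. scale_chain (carrier G) d K nn xs \<longrightarrow> \<bar>ind W (hd xs) - ind W (last xs)\<bar> < e)"
      using gs by blast
  qed
  have "\<forall>x. x \<notin> carrier G \<longrightarrow> ind W x = 0" using comps_sub[OF W] unfolding ind_def by auto
  then show ?thesis unfolding GO_functions_def using go by (auto simp: ind_def)
qed

end

context cay begin

lemma emb_GO: "f \<in> GO \<Longrightarrow> emb x f = f x" by (simp add: CF_embed_def)
lemma emb_nGO: "f \<notin> GO \<Longrightarrow> emb x f = 0" by (simp add: CF_embed_def)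

lemma rem_iff: "p \<in> rem \<longleftrightarrow> p \<in> closure (emb ` carrier G) \<and> p \<notin> emb ` carrier G"
  by (simp add: CF_remainder_def)

lemma clos_nGO: "p \<in> closure (emb ` A) \<Longrightarrow> f \<notin> GO \<Longrightarrow> p f = 0"
proof -
  assume p: "p \<in> closure (emb ` A)" and f: "f \<notin> GO"
  have "p f \<in> {0}" by (rule closure_coord[OF p]) (use f emb_nGO in auto)
  then show ?thesis by simp
qed

lemma clos_ind: assumes p: "p \<in> closure (emb ` W')" and W: "W \<in> comps n" and W': "W' \<in> comps n"
  shows "p (ind W) = (if W = W' then 1 else 0)"
proof -
  have go: "ind W \<in> GO" using ind_GO[OF W] .
  have "p (ind W) \<in> {if W = W' then 1 else 0}"
  proof (rule closure_coord[OF p])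
    fix a assume "a \<in> emb ` W'"
    then obtain x where x: "x \<in> W'" "a = emb x" by blast
    have "W = W' \<or> W \<inter> W' = {}" using comps_disj[OF W W'] by blast
    then show "a (ind W) \<in> {if W = W' then 1 else 0}" using x emb_GO[OF go] by (auto simp: ind_def)
  qed simp
  then show ?thesis by simp
qed

lemma rem_comp_ex: assumes p: "p \<in> rem" shows "\<exists>W\<in>comps n. p \<in> closure (emb ` W)"
proof -
  have "emb ` carrier G = emb ` B n \<union> \<Union>((\<lambda>W. emb ` W) ` comps n)"
    using carrier_cover[of n] by blast
  then have "closure (emb ` carrier G) = closure (emb ` B n) \<union> \<Union>(closure ` ((\<lambda>W. emb ` W) ` comps n))"
    using closure_finite_Union[of "(\<lambda>W. emb ` W) ` comps n"] comps_fin by simp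
  moreover have "closure (emb ` B n) = emb ` B n"
    using closed_finite_fun[of "emb ` B n"] Bfin by (simp add: closure_closed)
  moreover have "emb ` B n \<subseteq> emb ` carrier G" using B_sub by blast
  ultimately have eq: "closure (emb ` carrier G) = emb ` B n \<union> \<Union>(closure ` ((\<lambda>W. emb ` W) ` comps n))"
    by simp
  have "p \<in> emb ` B n \<union> \<Union>(closure ` ((\<lambda>W. emb ` W) ` comps n))" using p rem_iff eq by simp
  moreover have "p \<notin> emb ` B n" using p rem_iff \<open>emb ` B n \<subseteq> emb ` carrier G\<close> by blast
  ultimately have "p \<in> \<Union>(closure ` ((\<lambda>W. emb ` W) ` comps n))" by simp
  then obtain W where "W \<in> comps n" "p \<in> closure (emb ` W)" by auto
  then show ?thesis by blast
qed

lemma rem_comp_uniq: "W \<in> comps n \<Longrightarrow> W' \<in> comps n \<Longrightarrow> p \<in> closure (emb ` W) \<Longrightarrow> p \<in> closure (emb ` W') \<Longrightarrow> W = W'"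
proof -
  assume W: "W \<in> comps n" and W': "W' \<in> comps n" and p: "p \<in> closure (emb ` W)" and p': "p \<in> closure (emb ` W')"
  have "p (ind W) = 1" using clos_ind[OF p W W] by simp
  moreover have "p (ind W) = (if W = W' then 1 else 0)" using clos_ind[OF p' W W'] .
  ultimately show "W = W'" by (metis zero_neq_one)
qed

definition Phi :: "(('a \<Rightarrow> real) \<Rightarrow> real) \<Rightarrow> nat \<Rightarrow> 'a set" where
  "Phi p n = \<Union>{W \<in> comps n. p \<in> closure (emb ` W)}"

lemma Phi_eq: "W \<in> comps n \<Longrightarrow> p \<in> closure (emb ` W) \<Longrightarrow> Phi p n = W"
proof -
  assume W: "W \<in> comps n" and p: "p \<in> closure (emb ` W)"
  have "{W \<in> comps n. p \<in> closure (emb ` W)} = {W}" using rem_comp_uniq[OF W _ p] W p by blast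
  then show ?thesis unfolding Phi_def by simp
qed

lemma Phi_prop: "p \<in> rem \<Longrightarrow> Phi p n \<in> comps n \<and> p \<in> closure (emb ` Phi p n)"
proof -
  assume p: "p \<in> rem"
  obtain W where W: "W \<in> comps n" "p \<in> closure (emb ` W)" using rem_comp_ex[OF p] by blast
  then show ?thesis using Phi_eq[OF W] by simp
qed

lemma Phi_gends: assumes p: "p \<in> rem" shows "Phi p \<in> gends"
  unfolding gends_def
proof (intro CollectI allI conjI)
  fix n
  show "Phi p n \<in> comps n" using Phi_prop[OF p] by blast
  obtain W' where W': "W' \<in> comps n" "Phi p (Suc n) \<subseteq> W'"
    using comps_mono[of n "Suc n" "Phi p (Suc n)"] Phi_prop[OF p, of "Suc n"] by auto
  have "closure (emb ` Phi p (Suc n)) \<subseteq> closure (emb ` W')" using W'(2) by (intro closure_mono image_mono)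
  moreover have "p \<in> closure (emb ` Phi p (Suc n))" using Phi_prop[OF p, of "Suc n"] by simp
  ultimately have "p \<in> closure (emb ` W')" by (rule subsetD)
  then have "Phi p n = W'" using Phi_eq[OF W'(1)] by blast
  then show "Phi p (Suc n) \<subseteq> Phi p n" using W' by simp
qed

lemma Phi_inj: "inj_on Phi rem"
proof (rule inj_onI)
  fix p q assume p: "p \<in> rem" and q: "q \<in> rem" and eq: "Phi p = Phi q"
  have pc: "p \<in> closure (emb ` carrier G)" and qc: "q \<in> closure (emb ` carrier G)" using p q rem_iff by auto
  show "p = q"
  proof (rule ext)
    fix f
    show "p f = q f"
    proof (cases "f \<in> GO")
      case False
      then show ?thesis using clos_nGO[OF pc] clos_nGO[OF qc] by simp
    next
      case True
      show ?thesis
      proof (rule ccontr)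
        assume ne: "p f \<noteq> q f"
        define e where "e = \<bar>p f - q f\<bar> / 3"
        have e: "e > 0" using ne e_def by simp
        have go: "glacially_oscillating (carrier G) d f" using True unfolding GO_functions_def by blast
        obtain N where N: "\<And>n W x y. n \<ge> N \<Longrightarrow> W \<in> comps n \<Longrightarrow> x \<in> W \<Longrightarrow> y \<in> W \<Longrightarrow> \<bar>f x - f y\<bar> < e"
          using go_const[OF go e] by blast
        define W where "W = Phi p N"
        have W: "W \<in> comps N" "p \<in> closure (emb ` W)" using Phi_prop[OF p] W_def by auto
        have Wq: "q \<in> closure (emb ` W)" using Phi_prop[OF q] W_def eq by auto
        obtain x0 where x0: "x0 \<in> W" using comps_ne[OF W(1)] by blast
        have inc: "a f \<in> cball (f x0) e" if ain: "a \<in> emb ` W" for a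
        proof -
          obtain x where x: "x \<in> W" "a = emb x" using ain by blast
          have "\<bar>f x0 - f x\<bar> < e" using N[OF le_refl W(1) x0 x(1)] .
          then show ?thesis using x emb_GO[OF True] by (simp add: dist_real_def)
        qed
        have "p f \<in> cball (f x0) e" by (rule closure_coord[OF W(2) inc]) auto
        moreover have "q f \<in> cball (f x0) e" by (rule closure_coord[OF Wq inc]) auto
        ultimately have "\<bar>p f - q f\<bar> \<le> 2 * e" by (simp add: dist_real_def abs_le_iff)
        then show False using e e_def by simp
      qed
    qed
  qed
qed

lemma rem_lepoll: "rem \<lesssim> gends"
  unfolding lepoll_def using Phi_inj Phi_gends by blast


lemma gends_dec: assumes W: "W \<in> gends" and mn: "m \<le> n" shows "W n \<subseteq> W m"
  using mn
proof (induction rule: dec_induct)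
  case base then show ?case by simp
next
  case (step k)
  have "W (Suc k) \<subseteq> W k" using W unfolding gends_def by blast
  then show ?case using step.IH by blast
qed

lemma gends_comps: "W \<in> gends \<Longrightarrow> W n \<in> comps n"
  unfolding gends_def by blast

definition xs :: "(nat \<Rightarrow> 'a set) \<Rightarrow> nat \<Rightarrow> 'a" where "xs W n = (SOME x. x \<in> W n)"

lemma xs_in: "W \<in> gends \<Longrightarrow> xs W n \<in> W n"
  unfolding xs_def using comps_ne[OF gends_comps] by (metis some_in_eq)

lemma xs_in_le: "W \<in> gends \<Longrightarrow> m \<le> n \<Longrightarrow> xs W n \<in> W m"
  using xs_in gends_dec by blast

definition Lf :: "(nat \<Rightarrow> 'a set) \<Rightarrow> ('a \<Rightarrow> real) \<Rightarrow> real" where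
  "Lf W f = lim (\<lambda>n. f (xs W n))"

lemma Lf_conv: assumes W: "W \<in> gends" and f: "f \<in> GO" shows "(\<lambda>n. f (xs W n)) \<longlonglongrightarrow> Lf W f"
proof -
  have go: "glacially_oscillating (carrier G) d f" using f unfolding GO_functions_def by blast
  have "Cauchy (\<lambda>n. f (xs W n))"
  proof (rule metric_CauchyI)
    fix e :: real assume e: "e > 0"
    obtain N where N: "\<And>n W x y. n \<ge> N \<Longrightarrow> W \<in> comps n \<Longrightarrow> x \<in> W \<Longrightarrow> y \<in> W \<Longrightarrow> \<bar>f x - f y\<bar> < e"
      using go_const[OF go e] by blast
    have "\<forall>m\<ge>N. \<forall>n\<ge>N. dist (f (xs W m)) (f (xs W n)) < e"
    proof (intro allI impI)
      fix m n assume "m \<ge> N" "n \<ge> N"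
      then have "xs W m \<in> W N" "xs W n \<in> W N" using xs_in_le[OF W] by auto
      then show "dist (f (xs W m)) (f (xs W n)) < e" using N[OF le_refl gends_comps[OF W]] by (simp add: dist_real_def)
    qed
    then show "\<exists>M. \<forall>m\<ge>M. \<forall>n\<ge>M. dist (f (xs W m)) (f (xs W n)) < e" by blast
  qed
  then show ?thesis unfolding Lf_def using Cauchy_convergent_iff convergent_LIMSEQ_iff by blast
qed

lemma Lf_approx: assumes W: "W \<in> gends" and f: "f \<in> GO" and e: "e > 0"
  shows "\<exists>N. \<forall>n\<ge>N. \<forall>x\<in>W n. \<bar>f x - Lf W f\<bar> \<le> e"
proof -
  have go: "glacially_oscillating (carrier G) d f" using f unfolding GO_functions_def by blast
  obtain N where N: "\<And>n W x y. n \<ge> N \<Longrightarrow> W \<in> comps n \<Longrightarrow> x \<in> W \<Longrightarrow> y \<in> W \<Longrightarrow> \<bar>f x - f y\<bar> < e"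
    using go_const[OF go e] by blast
  have "\<forall>n\<ge>N. \<forall>x\<in>W n. \<bar>f x - Lf W f\<bar> \<le> e"
  proof (intro allI impI ballI)
    fix n x assume n: "n \<ge> N" and x: "x \<in> W n"
    have xN: "x \<in> W N" using gends_dec[OF W n] x by blast
    have lim: "(\<lambda>m. \<bar>f x - f (xs W m)\<bar>) \<longlonglongrightarrow> \<bar>f x - Lf W f\<bar>"
      using Lf_conv[OF W f] by (intro tendsto_intros)
    have "\<forall>m\<ge>N. \<bar>f x - f (xs W m)\<bar> \<le> e"
    proof (intro allI impI)
      fix m assume "m \<ge> N"
      then have "xs W m \<in> W N" using xs_in_le[OF W] by auto
      then show "\<bar>f x - f (xs W m)\<bar> \<le> e" using N[OF le_refl gends_comps[OF W] xN] by fastforce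
    qed
    then show "\<bar>f x - Lf W f\<bar> \<le> e" using LIMSEQ_le_const2[OF lim] by blast
  qed
  then show ?thesis by blast
qed

lemma Lf_ind: assumes W: "W \<in> gends" and V: "V \<in> comps n"
  shows "Lf W (ind V) = (if V = W n then 1 else 0)"
proof -
  have "V = W n \<or> V \<inter> W n = {}" using comps_disj[OF V gends_comps[OF W]] by blast
  then have "\<forall>m\<ge>n. ind V (xs W m) = (if V = W n then 1 else 0)"
    using xs_in_le[OF W] unfolding ind_def by auto
  then have "eventually (\<lambda>m. ind V (xs W m) = (if V = W n then 1 else 0)) sequentially"
    unfolding eventually_sequentially by blast
  then have "(\<lambda>m. ind V (xs W m)) \<longlonglongrightarrow> (if V = W n then 1 else 0)" by (rule tendsto_eventually)
  then show ?thesis unfolding Lf_def by (rule limI)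
qed

definition Psi :: "(nat \<Rightarrow> 'a set) \<Rightarrow> ('a \<Rightarrow> real) \<Rightarrow> real" where
  "Psi W f = (if f \<in> GO then Lf W f else 0)"

lemma Psi_closure: assumes W: "W \<in> gends" shows "Psi W \<in> closure (emb ` carrier G)"
proof (rule closure_fun_intro)
  fix F :: "('a \<Rightarrow> real) set" and e :: real assume F: "finite F" and e: "e > 0"
  have "\<forall>f\<in>F \<inter> GO. eventually (\<lambda>n. \<forall>x\<in>W n. \<bar>f x - Lf W f\<bar> \<le> e / 2) sequentially"
  proof
    fix f assume "f \<in> F \<inter> GO"
    then show "eventually (\<lambda>n. \<forall>x\<in>W n. \<bar>f x - Lf W f\<bar> \<le> e / 2) sequentially"
      using Lf_approx[OF W, of f "e/2"] e unfolding eventually_sequentially by auto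
  qed
  then have "eventually (\<lambda>n. \<forall>f\<in>F \<inter> GO. \<forall>x\<in>W n. \<bar>f x - Lf W f\<bar> \<le> e / 2) sequentially"
    using F by (intro eventually_ball_finite) auto
  then obtain n where n: "\<forall>f\<in>F \<inter> GO. \<forall>x\<in>W n. \<bar>f x - Lf W f\<bar> \<le> e / 2"
    unfolding eventually_sequentially by blast
  define x where "x = xs W n"
  have x: "x \<in> W n" "x \<in> carrier G" using xs_in[OF W] comps_sub[OF gends_comps[OF W]] x_def by auto
  have "\<forall>f\<in>F. \<bar>emb x f - Psi W f\<bar> < e"
  proof
    fix f assume fF: "f \<in> F"
    show "\<bar>emb x f - Psi W f\<bar> < e"
    proof (cases "f \<in> GO")
      case True
      then have "\<bar>f x - Lf W f\<bar> \<le> e / 2" using n fF x by blast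
      then show ?thesis using True e by (simp add: emb_GO Psi_def)
    next
      case False then show ?thesis using e by (simp add: emb_nGO Psi_def)
    qed
  qed
  then show "\<exists>a\<in>emb ` carrier G. \<forall>f\<in>F. \<bar>a f - Psi W f\<bar> < e" using x by blast
qed

lemma Psi_notin: assumes W: "W \<in> gends" shows "Psi W \<notin> emb ` carrier G"
proof
  assume "Psi W \<in> emb ` carrier G"
  then obtain x where x: "x \<in> carrier G" "Psi W = emb x" by blast
  define n where "n = nat \<lceil>w x\<rceil>"
  have xB: "x \<in> B n" unfolding B_def n_def using x by simp linarith
  have V: "W n \<in> comps n" using gends_comps[OF W] .
  have go: "ind (W n) \<in> GO" using ind_GO[OF V] .
  have "Psi W (ind (W n)) = 1" using Lf_ind[OF W V] go by (simp add: Psi_def)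
  then have "ind (W n) x = 1" using x emb_GO[OF go] by simp
  then have "x \<in> W n" unfolding ind_def by (simp split: if_splits)
  then show False using comps_sub[OF V] xB by blast
qed

lemma Psi_inj: "inj_on Psi gends"
proof (rule inj_onI)
  fix W W' assume W: "W \<in> gends" and W': "W' \<in> gends" and eq: "Psi W = Psi W'"
  show "W = W'"
  proof (rule ccontr)
    assume "W \<noteq> W'"
    then obtain n where ne: "W n \<noteq> W' n" by blast
    have V: "W n \<in> comps n" using gends_comps[OF W] .
    have go: "ind (W n) \<in> GO" using ind_GO[OF V] .
    have "Psi W (ind (W n)) = 1" using Lf_ind[OF W V] go by (simp add: Psi_def)
    moreover have "Psi W' (ind (W n)) = 0" using Lf_ind[OF W' V] go ne by (simp add: Psi_def)
    ultimately show False using eq by simp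
  qed
qed

lemma gends_lepoll: "gends \<lesssim> rem"
  unfolding lepoll_def
proof (intro exI conjI)
  show "inj_on Psi gends" by (rule Psi_inj)
  show "Psi ` gends \<subseteq> rem" using Psi_closure Psi_notin rem_iff by blast
qed

lemma rem_eqpoll: "rem \<approx> gends"
  using lepoll_antisym[OF rem_lepoll gends_lepoll] .

end

context cay begin

abbreviation cp :: "'a \<Rightarrow> 'a \<Rightarrow> real \<Rightarrow> 'a + ('a \<times> 'a \<times> real) set" where
  "cp g s t \<equiv> cayley_point G (g, s, t)"
abbreviation "Ys \<equiv> cayley_set G S"
abbreviation "Y \<equiv> cayley_top G S"

definition OP :: "('a + ('a \<times> 'a \<times> real) set) set \<Rightarrow> bool" where
  "OP U \<longleftrightarrow> U \<subseteq> Ys \<and> (\<forall>g\<in>carrier G. \<forall>s\<in>S. openin (top_of_set {0..1::real}) {t \<in> {0..1}. cp g s t \<in> U})"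

lemma istop: "istopology OP"
  unfolding istopology_def
proof (intro conjI allI impI)
  fix U V assume U: "OP U" and V: "OP V"
  show "OP (U \<inter> V)" unfolding OP_def
  proof (intro conjI ballI)
    show "U \<inter> V \<subseteq> Ys" using U unfolding OP_def by blast
    fix g s assume g: "g \<in> carrier G" and s: "s \<in> S"
    have "{t \<in> {0..1}. cp g s t \<in> U \<inter> V} = {t \<in> {0..1}. cp g s t \<in> U} \<inter> {t \<in> {0..1}. cp g s t \<in> V}" by blast
    then show "openin (top_of_set {0..1}) {t \<in> {0..1}. cp g s t \<in> U \<inter> V}"
      using U V g s unfolding OP_def by (metis (no_types, lifting) openin_Int)
  qed
next
  fix KK assume KK: "\<forall>U\<in>KK. OP U"
  show "OP (\<Union>KK)" unfolding OP_def
  proof (intro conjI ballI)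
    show "\<Union>KK \<subseteq> Ys" using KK unfolding OP_def by blast
    fix g s assume g: "g \<in> carrier G" and s: "s \<in> S"
    have "{t \<in> {0..1}. cp g s t \<in> \<Union>KK} = \<Union>((\<lambda>U. {t \<in> {0..1}. cp g s t \<in> U}) ` KK)" by blast
    moreover have "openin (top_of_set {0..1}) (\<Union>((\<lambda>U. {t \<in> {0..1}. cp g s t \<in> U}) ` KK))"
      using KK g s unfolding OP_def by (intro openin_Union) blast
    ultimately show "openin (top_of_set {0..1}) {t \<in> {0..1}. cp g s t \<in> \<Union>KK}" by simp
  qed
qed

lemma openin_Y: "openin Y U \<longleftrightarrow> OP U"
proof -
  have "cayley_top G S = topology OP" unfolding cayley_top_def OP_def by simp
  then show ?thesis using istop by simp
qed

lemma cp_in: "g \<in> carrier G \<Longrightarrow> s \<in> S \<Longrightarrow> t \<in> {0..1} \<Longrightarrow> cp g s t \<in> Ys"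
  unfolding cayley_set_def by blast

lemma Ys_cases: "y \<in> Ys \<Longrightarrow> \<exists>g s t. g \<in> carrier G \<and> s \<in> S \<and> t \<in> {0..1} \<and> y = cp g s t"
  unfolding cayley_set_def by blast

lemma OP_Ys: "OP Ys"
proof -
  have "\<And>g s. g \<in> carrier G \<Longrightarrow> s \<in> S \<Longrightarrow> {t \<in> {0..1::real}. cp g s t \<in> Ys} = {0..1}"
    using cp_in by blast
  then show ?thesis unfolding OP_def by simp
qed

lemma topspace_Y: "topspace Y = Ys"
proof
  show "topspace Y \<subseteq> Ys" unfolding topspace_def using openin_Y OP_def by blast
  show "Ys \<subseteq> topspace Y" using openin_Y OP_Ys openin_subset by blast
qed

lemma edge_cont: assumes g: "g \<in> carrier G" and s: "s \<in> S"
  shows "continuous_map (top_of_set {0..1}) Y (\<lambda>t. cp g s t)"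
  unfolding continuous_map
proof (intro conjI allI impI)
  show "(\<lambda>t. cp g s t) ` topspace (top_of_set {0..1}) \<subseteq> topspace Y"
    using cp_in[OF g s] topspace_Y by auto
  fix U assume "openin Y U"
  then have "OP U" using openin_Y by blast
  then show "openin (top_of_set {0..1}) {x \<in> topspace (top_of_set {0..1}). cp g s x \<in> U}"
    unfolding OP_def using g s by simp
qed

lemma cont_out: assumes H: "\<And>g s. g \<in> carrier G \<Longrightarrow> s \<in> S \<Longrightarrow> continuous_on {0..1} (\<lambda>t. f (cp g s t))"
  shows "continuous_map Y euclideanreal f"
  unfolding continuous_map
proof (intro conjI allI impI)
  show "f ` topspace Y \<subseteq> topspace euclideanreal" by simp
  fix V assume "openin euclideanreal V"
  then have V: "open V" by simp
  show "openin Y {x \<in> topspace Y. f x \<in> V}" unfolding openin_Y OP_def topspace_Y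
  proof (intro conjI ballI)
    show "{x \<in> Ys. f x \<in> V} \<subseteq> Ys" by blast
    fix g s assume g: "g \<in> carrier G" and s: "s \<in> S"
    have "{t \<in> {0..1}. cp g s t \<in> {x \<in> Ys. f x \<in> V}} = {0..1} \<inter> (\<lambda>t. f (cp g s t)) -` V"
      using cp_in[OF g s] by auto
    then show "openin (top_of_set {0..1}) {t \<in> {0..1}. cp g s t \<in> {x \<in> Ys. f x \<in> V}}"
      using continuous_openin_preimage_gen[OF H[OF g s] V] by simp
  qed
qed

definition vtx :: "'a \<Rightarrow> 'a \<Rightarrow> real \<Rightarrow> 'a" where "vtx g s t = (if t = 0 then g else g \<otimes> s)"

lemma cp_0: "cp g s 0 = Inl g" by (simp add: cayley_point_def)
lemma cp_1: "cp g s 1 = Inl (g \<otimes> s)" by (simp add: cayley_point_def)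
lemma cp_mid: "0 < t \<Longrightarrow> t < 1 \<Longrightarrow> cp g s t = Inr (if s = \<one> then {(g, s, t)} else {(g, s, t), (g \<otimes> s, inv s, 1 - t)})"
  by (simp add: cayley_point_def)

lemma cp_eq_cases:
  assumes g: "g \<in> carrier G" and s: "s \<in> S" and t: "t \<in> {0..1}"
    and g': "g' \<in> carrier G" and s': "s' \<in> S" and t': "t' \<in> {0..1}"
    and eq: "cp g s t = cp g' s' t'"
  shows "(t \<in> {0, 1} \<and> t' \<in> {0, 1} \<and> vtx g s t = vtx g' s' t') \<or>
         (0 < t \<and> t < 1 \<and> 0 < t' \<and> t' < 1 \<and> ((g', s', t') = (g, s, t) \<or> (g', s', t') = (g \<otimes> s, inv s, 1 - t)))"
proof (cases "t \<in> {0, 1}")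
  case True
  then have L: "cp g s t = Inl (vtx g s t)" unfolding vtx_def using cp_0 cp_1 by auto
  show ?thesis
  proof (cases "t' \<in> {0, 1}")
    case True
    then have "cp g' s' t' = Inl (vtx g' s' t')" unfolding vtx_def using cp_0 cp_1 by auto
    then show ?thesis using L eq \<open>t \<in> {0, 1}\<close> True by simp
  next
    case False
    then have "0 < t'" "t' < 1" using t' by auto
    then show ?thesis using cp_mid[of t' g' s'] L eq by simp
  qed
next
  case False
  then have tt: "0 < t" "t < 1" using t by auto
  show ?thesis
  proof (cases "t' \<in> {0, 1}")
    case True
    then have "cp g' s' t' = Inl (vtx g' s' t')" unfolding vtx_def using cp_0 cp_1 by auto
    then show ?thesis using cp_mid[OF tt, of g s] eq by simp
  next
    case False
    then have tt': "0 < t'" "t' < 1" using t' by auto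
    have "(g', s', t') \<in> (if s' = \<one> then {(g', s', t')} else {(g', s', t'), (g' \<otimes> s', inv s', 1 - t')})" by simp
    then have "(g', s', t') \<in> (if s = \<one> then {(g, s, t)} else {(g, s, t), (g \<otimes> s, inv s, 1 - t)})"
      using eq cp_mid[OF tt, of g s] cp_mid[OF tt', of g' s'] by simp
    then have "(g', s', t') = (g, s, t) \<or> (g', s', t') = (g \<otimes> s, inv s, 1 - t)" by (auto split: if_splits)
    then show ?thesis using tt tt' by blast
  qed
qed

definition hv :: "'a \<Rightarrow> 'a \<Rightarrow> real \<Rightarrow> real" where "hv g s t = (1 - t) * w g + t * w (g \<otimes> s)"

lemma hv_vtx: "t \<in> {0, 1} \<Longrightarrow> hv g s t = w (vtx g s t)"
  unfolding hv_def vtx_def by auto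

lemma hv_eq:
  assumes g: "g \<in> carrier G" and s: "s \<in> S" and t: "t \<in> {0..1}"
    and g': "g' \<in> carrier G" and s': "s' \<in> S" and t': "t' \<in> {0..1}"
    and eq: "cp g s t = cp g' s' t'"
  shows "hv g s t = hv g' s' t'"
proof -
  have sc: "s \<in> carrier G" using s Ssub by auto
  have "g \<otimes> s \<otimes> inv s = g" using g sc by (simp add: m_assoc)
  then have mid: "hv (g \<otimes> s) (inv s) (1 - t) = hv g s t" unfolding hv_def by (simp add: algebra_simps)
  from cp_eq_cases[OF assms] show ?thesis
  proof
    assume "t \<in> {0, 1} \<and> t' \<in> {0, 1} \<and> vtx g s t = vtx g' s' t'"
    then show ?thesis using hv_vtx by metis
  next
    assume "0 < t \<and> t < 1 \<and> 0 < t' \<and> t' < 1 \<and> ((g', s', t') = (g, s, t) \<or> (g', s', t') = (g \<otimes> s, inv s, 1 - t))"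
    then show ?thesis using mid by auto
  qed
qed

definition hgt :: "'a + ('a \<times> 'a \<times> real) set \<Rightarrow> real" where
  "hgt y = (THE r. \<exists>g s t. g \<in> carrier G \<and> s \<in> S \<and> t \<in> {0..1} \<and> y = cp g s t \<and> r = hv g s t)"

lemma hgt_cp: assumes g: "g \<in> carrier G" and s: "s \<in> S" and t: "t \<in> {0..1}"
  shows "hgt (cp g s t) = hv g s t"
  unfolding hgt_def
proof (rule the_equality)
  show "\<exists>g' s' t'. g' \<in> carrier G \<and> s' \<in> S \<and> t' \<in> {0..1} \<and> cp g s t = cp g' s' t' \<and> hv g s t = hv g' s' t'"
    using assms by blast
  fix r assume "\<exists>g' s' t'. g' \<in> carrier G \<and> s' \<in> S \<and> t' \<in> {0..1} \<and> cp g s t = cp g' s' t' \<and> r = hv g' s' t'"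
  then show "r = hv g s t" using hv_eq[OF g s t] by metis
qed

lemma hv_cont: "continuous_on A (\<lambda>t. hv g s t)"
  unfolding hv_def by (intro continuous_intros)

lemma hgt_cont: "continuous_map Y euclideanreal hgt"
proof (rule cont_out)
  fix g s assume g: "g \<in> carrier G" and s: "s \<in> S"
  have "continuous_on {0..1} (\<lambda>t. hv g s t)" by (rule hv_cont)
  then show "continuous_on {0..1} (\<lambda>t. hgt (cp g s t))"
    using hgt_cp[OF g s] by (metis (no_types, lifting) continuous_on_cong)
qed

lemma hv_le_max: "t \<in> {0..1} \<Longrightarrow> hv g s t \<le> max (w g) (w (g \<otimes> s))"
proof -
  assume t: "t \<in> {0..1}"
  have "(1 - t) * w g \<le> (1 - t) * max (w g) (w (g \<otimes> s))" using t by (intro mult_left_mono) auto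
  moreover have "t * w (g \<otimes> s) \<le> t * max (w g) (w (g \<otimes> s))" using t by (intro mult_left_mono) auto
  ultimately show ?thesis unfolding hv_def by (simp add: algebra_simps)
qed

lemma hv_ge_min: "t \<in> {0..1} \<Longrightarrow> hv g s t \<ge> min (w g) (w (g \<otimes> s))"
proof -
  assume t: "t \<in> {0..1}"
  have "(1 - t) * w g \<ge> (1 - t) * min (w g) (w (g \<otimes> s))" using t by (intro mult_left_mono) auto
  moreover have "t * w (g \<otimes> s) \<ge> t * min (w g) (w (g \<otimes> s))" using t by (intro mult_left_mono) auto
  ultimately show ?thesis unfolding hv_def by (simp add: algebra_simps)
qed

lemma hv_big: assumes g: "g \<in> carrier G" and s: "s \<in> S" and t: "t \<in> {0..1}" and h: "hv g s t > real n + C"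
  shows "g \<notin> B n \<and> g \<otimes> s \<notin> B n"
proof -
  have st: "\<bar>w (g \<otimes> s) - w g\<bar> \<le> C" using w_step[OF g s] .
  have "max (w g) (w (g \<otimes> s)) > real n + C" using hv_le_max[OF t, of g s] h by linarith
  then have "w g > real n" "w (g \<otimes> s) > real n" using st by auto
  then show ?thesis unfolding B_def by auto
qed

lemma hv_big_Rn: assumes g: "g \<in> carrier G" and s: "s \<in> S" and t: "t \<in> {0..1}" and h: "hv g s t > real n + C"
  shows "(g, g \<otimes> s) \<in> Rn n"
  using hv_big[OF assms] g s unfolding Rn_def by blast

lemma vtx_conn: assumes g: "g \<in> carrier G" and s: "s \<in> S" and t: "t \<in> {0..1}" and h: "hv g s t > real n + C"
  shows "(g, vtx g s t) \<in> (Rn n)\<^sup>*"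
  using hv_big_Rn[OF assms] unfolding vtx_def by auto

lemma rep_conn:
  assumes g: "g \<in> carrier G" and s: "s \<in> S" and t: "t \<in> {0..1}"
    and g': "g' \<in> carrier G" and s': "s' \<in> S" and t': "t' \<in> {0..1}"
    and eq: "cp g s t = cp g' s' t'" and h: "hv g s t > real n + C"
  shows "(g, g') \<in> (Rn n)\<^sup>*"
proof -
  have h': "hv g' s' t' > real n + C" using hv_eq[OF assms(1-7)] h by simp
  from cp_eq_cases[OF assms(1-7)] show ?thesis
  proof
    assume a: "t \<in> {0, 1} \<and> t' \<in> {0, 1} \<and> vtx g s t = vtx g' s' t'"
    have 1: "(g, vtx g s t) \<in> (Rn n)\<^sup>*" using vtx_conn[OF g s t h] .
    have 2: "(g', vtx g' s' t') \<in> (Rn n)\<^sup>*" using vtx_conn[OF g' s' t' h'] .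
    then have "(vtx g s t, g') \<in> (Rn n)\<^sup>*" using a Rn_rtr_sym by metis
    then show ?thesis using 1 by (rule rtrancl_trans[rotated])
  next
    assume "0 < t \<and> t < 1 \<and> 0 < t' \<and> t' < 1 \<and> ((g', s', t') = (g, s, t) \<or> (g', s', t') = (g \<otimes> s, inv s, 1 - t))"
    then have "g' = g \<or> g' = g \<otimes> s" by auto
    then show ?thesis using hv_big_Rn[OF g s t h] by auto
  qed
qed

definition Tset :: "'a set \<Rightarrow> ('a + ('a \<times> 'a \<times> real) set) set" where
  "Tset W = {cp g s t | g s t. g \<in> W \<and> s \<in> S \<and> t \<in> {0..1}}"

definition Oset :: "nat \<Rightarrow> ('a + ('a \<times> 'a \<times> real) set) set" where
  "Oset n = {y \<in> Ys. hgt y > real n + C}"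

lemma Tmem: assumes g: "g \<in> carrier G" and s: "s \<in> S" and t: "t \<in> {0..1}" and h: "hv g s t > real n + C"
  and W: "W \<in> comps n"
  shows "cp g s t \<in> Tset W \<longleftrightarrow> g \<in> W"
proof
  assume "cp g s t \<in> Tset W"
  then obtain g' s' t' where r: "g' \<in> W" "s' \<in> S" "t' \<in> {0..1}" "cp g s t = cp g' s' t'"
    unfolding Tset_def by blast
  have g': "g' \<in> carrier G" using r comps_sub[OF W] by auto
  have "(g, g') \<in> (Rn n)\<^sup>*" using rep_conn[OF g s t g' r(2,3,4) h] .
  then show "g \<in> W" using comps_closed_rtr[OF W r(1)] Rn_rtr_sym by blast
next
  assume "g \<in> W" then show "cp g s t \<in> Tset W" unfolding Tset_def using s t by blast
qed

lemma open_hv: "openin (top_of_set {0..1}) {t \<in> {0..1}. hv g s t > c}"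
proof -
  have "{t \<in> {0..1}. hv g s t > c} = {0..1} \<inter> (\<lambda>t. hv g s t) -` {c<..}" by auto
  moreover have "openin (top_of_set {0..1}) ({0..1} \<inter> (\<lambda>t. hv g s t) -` {c<..})"
    by (rule continuous_openin_preimage_gen[OF hv_cont open_greaterThan])
  ultimately show ?thesis by simp
qed

lemma open_OT: assumes W: "W \<in> comps n"
  shows "openin Y (Oset n \<inter> Tset W)" "openin Y (Oset n - Tset W)"
proof -
  have pre: "{t \<in> {0..1}. cp g s t \<in> Oset n \<inter> Tset W} = (if g \<in> W then {t \<in> {0..1}. hv g s t > real n + C} else {})"
    and pre2: "{t \<in> {0..1}. cp g s t \<in> Oset n - Tset W} = (if g \<in> W then {} else {t \<in> {0..1}. hv g s t > real n + C})"
    if g: "g \<in> carrier G" and s: "s \<in> S" for g s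
  proof -
    have "cp g s t \<in> Oset n \<longleftrightarrow> hv g s t > real n + C" if t: "t \<in> {0..1}" for t
      unfolding Oset_def using hgt_cp[OF g s t] cp_in[OF g s t] by simp
    then show "{t \<in> {0..1}. cp g s t \<in> Oset n \<inter> Tset W} = (if g \<in> W then {t \<in> {0..1}. hv g s t > real n + C} else {})"
      "{t \<in> {0..1}. cp g s t \<in> Oset n - Tset W} = (if g \<in> W then {} else {t \<in> {0..1}. hv g s t > real n + C})"
      using Tmem[OF g s _ _ W] by auto
  qed
  show "openin Y (Oset n \<inter> Tset W)" unfolding openin_Y OP_def
  proof (intro conjI ballI)
    show "Oset n \<inter> Tset W \<subseteq> Ys" unfolding Oset_def by blast
    fix g s assume g: "g \<in> carrier G" and s: "s \<in> S"
    show "openin (top_of_set {0..1}) {t \<in> {0..1}. cp g s t \<in> Oset n \<inter> Tset W}"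
      unfolding pre[OF g s] using open_hv by auto
  qed
  show "openin Y (Oset n - Tset W)" unfolding openin_Y OP_def
  proof (intro conjI ballI)
    show "Oset n - Tset W \<subseteq> Ys" unfolding Oset_def by blast
    fix g s assume g: "g \<in> carrier G" and s: "s \<in> S"
    show "openin (top_of_set {0..1}) {t \<in> {0..1}. cp g s t \<in> Oset n - Tset W}"
      unfolding pre2[OF g s] using open_hv by auto
  qed
qed

lemma conn_one: assumes U: "connectedin Y U" and UO: "U \<subseteq> Oset n" and W: "W \<in> comps n"
  and ne: "U \<inter> Tset W \<noteq> {}"
  shows "U \<subseteq> Tset W"
proof (rule ccontr)
  assume nsub: "\<not> U \<subseteq> Tset W"
  have "openin Y (Oset n \<inter> Tset W)" "openin Y (Oset n - Tset W)" using open_OT[OF W] by auto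
  moreover have "U \<subseteq> (Oset n \<inter> Tset W) \<union> (Oset n - Tset W)" using UO by blast
  moreover have "(Oset n \<inter> Tset W) \<inter> (Oset n - Tset W) \<inter> U = {}" by blast
  moreover have "(Oset n \<inter> Tset W) \<inter> U \<noteq> {}" using ne UO by blast
  moreover have "(Oset n - Tset W) \<inter> U \<noteq> {}" using nsub UO by blast
  ultimately show False using U unfolding connectedin by blast
qed

lemma Oset_T: assumes y: "y \<in> Oset n" shows "\<exists>W\<in>comps n. y \<in> Tset W"
proof -
  obtain g s t where r: "g \<in> carrier G" "s \<in> S" "t \<in> {0..1}" "y = cp g s t"
    using y Ys_cases unfolding Oset_def by blast
  have "hv g s t > real n + C" using y r hgt_cp unfolding Oset_def by auto
  then have "g \<notin> B n" using hv_big r by blast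
  then have "comp n g \<in> comps n" unfolding comps_def using r by blast
  moreover have "y \<in> Tset (comp n g)" unfolding Tset_def using r comp_self by blast
  ultimately show ?thesis by blast
qed

lemma T_unique: assumes y: "y \<in> Oset n" and W: "W \<in> comps n" and W': "W' \<in> comps n"
  and yW: "y \<in> Tset W" and yW': "y \<in> Tset W'"
  shows "W = W'"
proof -
  obtain g s t where r: "g \<in> W" "s \<in> S" "t \<in> {0..1}" "y = cp g s t" using yW unfolding Tset_def by blast
  have g: "g \<in> carrier G" using r comps_sub[OF W] by auto
  have h: "hv g s t > real n + C" using y r hgt_cp[OF g r(2,3)] unfolding Oset_def by auto
  have "g \<in> W'" using Tmem[OF g r(2,3) h W'] yW' r by simp
  then show ?thesis using comps_disj[OF W W'] r(1) by blast
qed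

end

context cay begin

lemma generate_empty: "x \<in> generate G {} \<Longrightarrow> x = \<one>"
  by (induction rule: generate.induct) auto

lemma S_ne: assumes "x \<in> carrier G - B n" shows "S \<noteq> {}"
proof
  assume "S = {}"
  then have "x = \<one>" using assms gen generate_empty[of x] by auto
  then show False using assms one_B by auto
qed

lemma cp_flip: assumes g: "g \<in> carrier G" and s: "s \<in> S" and s1: "s \<noteq> \<one>" and t: "t \<in> {0..1}"
  shows "cp (g \<otimes> s) (inv s) (1 - t) = cp g s t"
proof -
  have sc: "s \<in> carrier G" using s Ssub by auto
  have e: "g \<otimes> s \<otimes> inv s = g" using g sc by (simp add: m_assoc)
  have is1: "inv s \<noteq> \<one>" using s1 sc by (metis inv_one inv_inv)
  show ?thesis
  proof (cases "t = 0 \<or> t = 1")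
    case True then show ?thesis using e by (auto simp: cayley_point_def)
  next
    case False
    then have tt: "0 < t" "t < 1" "0 < 1 - t" "1 - t < 1" using t by auto
    have "cp (g \<otimes> s) (inv s) (1 - t) = Inr {(g \<otimes> s, inv s, 1 - t), (g \<otimes> s \<otimes> inv s, inv (inv s), 1 - (1 - t))}"
      using cp_mid[OF tt(3,4)] is1 by simp
    also have "\<dots> = Inr {(g, s, t), (g \<otimes> s, inv s, 1 - t)}" using e sc by auto
    also have "\<dots> = cp g s t" using cp_mid[OF tt(1,2)] s1 by simp
    finally show ?thesis .
  qed
qed

definition Ed :: "'a \<Rightarrow> 'a \<Rightarrow> ('a + ('a \<times> 'a \<times> real) set) set" where
  "Ed g s = (\<lambda>t. cp g s t) ` {0..1}"

lemma Ed_compact: "g \<in> carrier G \<Longrightarrow> s \<in> S \<Longrightarrow> compactin Y (Ed g s)"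
  unfolding Ed_def
  by (rule image_compactin[OF _ edge_cont]) (auto simp: compactin_subtopology)

lemma Ed_conn: "g \<in> carrier G \<Longrightarrow> s \<in> S \<Longrightarrow> connectedin Y (Ed g s)"
  unfolding Ed_def
  by (rule connectedin_continuous_map_image[OF edge_cont]) (auto simp: connectedin_subtopology)

lemma Ed_0: "cp g s 0 \<in> Ed g s" unfolding Ed_def by auto
lemma Ed_1: "cp g s 1 \<in> Ed g s" unfolding Ed_def by auto

lemma compact_low: "compactin Y {y \<in> Ys. hgt y \<le> r}"
proof -
  define M where "M = nat \<lceil>r\<rceil>"
  define Star where "Star = \<Union>((\<lambda>(g, s). Ed g s) ` (B M \<times> S))"
  have "\<And>p. p \<in> B M \<times> S \<Longrightarrow> compactin Y ((\<lambda>(g, s). Ed g s) p)"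
  proof -
    fix p assume "p \<in> B M \<times> S"
    then show "compactin Y ((\<lambda>(g, s). Ed g s) p)" using B_sub Ed_compact by (cases p) auto
  qed
  then have cS: "compactin Y Star" unfolding Star_def
    by (intro compactin_Union) (use Bfin finS in auto)
  have sub: "{y \<in> Ys. hgt y \<le> r} \<subseteq> Star"
  proof
    fix y assume y: "y \<in> {y \<in> Ys. hgt y \<le> r}"
    then obtain g s t where r: "g \<in> carrier G" "s \<in> S" "t \<in> {0..1}" "y = cp g s t" using Ys_cases by blast
    have "hv g s t \<le> r" using y r hgt_cp by auto
    then have mn: "min (w g) (w (g \<otimes> s)) \<le> real M" using hv_ge_min[OF r(3), of g s] unfolding M_def by linarith
    show "y \<in> Star"
    proof (cases "w g \<le> real M")
      case True
      then have "g \<in> B M" unfolding B_def using r by simp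
      then show ?thesis unfolding Star_def Ed_def using r by blast
    next
      case False
      then have wgs: "w (g \<otimes> s) \<le> real M" using mn by linarith
      have s1: "s \<noteq> \<one>" using False wgs r Ssub by auto
      have sc: "s \<in> carrier G" using r Ssub by auto
      have "g \<otimes> s \<in> B M" unfolding B_def using r sc wgs by simp
      moreover have "inv s \<in> S" using Sinv r by auto
      moreover have "y = cp (g \<otimes> s) (inv s) (1 - t)" using cp_flip[OF r(1,2) s1 r(3)] r by simp
      moreover have "1 - t \<in> {0..1}" using r by auto
      ultimately show ?thesis unfolding Star_def Ed_def by blast
    qed
  qed
  have "closedin Y {x \<in> topspace Y. hgt x \<in> {..r}}"
    by (rule closedin_continuous_map_preimage[OF hgt_cont]) simp
  then have cl: "closedin Y {y \<in> Ys. hgt y \<le> r}" using topspace_Y by simp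
  show ?thesis by (rule closed_compactin[OF cS sub cl])
qed

lemma hgt_bdd: assumes "compactin Y A" shows "\<exists>R. \<forall>y\<in>A. hgt y \<le> R"
proof -
  have "compactin euclideanreal (hgt ` A)" by (rule image_compactin[OF assms hgt_cont])
  then have "bounded (hgt ` A)" using compact_imp_bounded by simp
  then obtain a where a: "\<forall>x\<in>hgt ` A. \<bar>x\<bar> \<le> a" unfolding bounded_real by blast
  have "\<forall>y\<in>A. hgt y \<le> a"
  proof
    fix y assume "y \<in> A"
    then have "\<bar>hgt y\<bar> \<le> a" using a by blast
    then show "hgt y \<le> a" by linarith
  qed
  then show ?thesis by blast
qed

lemma vert_in: "x \<in> carrier G \<Longrightarrow> s \<in> S \<Longrightarrow> Inl x \<in> Ys"
  using cp_in[of x s 0] cp_0 by simp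

lemma hgt_vert: "x \<in> carrier G \<Longrightarrow> s \<in> S \<Longrightarrow> hgt (Inl x) = w x"
  using hgt_cp[of x s 0] cp_0 by (simp add: hv_def)

end

locale cayK = cay +
  fixes K :: "nat \<Rightarrow> ('a + ('a \<times> 'a \<times> real) set) set"
  assumes exh: "exhaustion (cayley_top G S) K"
begin

lemma K_compact: "compactin Y (K i)" using exh unfolding exhaustion_def by simp
lemma K_sub: "K i \<subseteq> Ys" using compactin_subset_topspace[OF K_compact] topspace_Y by simp
lemma K_Suc: "K i \<subseteq> K (Suc i)"
proof -
  have "K i \<subseteq> Y interior_of K (Suc i)" using exh unfolding exhaustion_def by simp
  then show ?thesis using interior_of_subset[of Y "K (Suc i)"] by (rule order_trans)
qed
lemma K_mono: "i \<le> j \<Longrightarrow> K i \<subseteq> K j"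
proof (induction rule: dec_induct)
  case base then show ?case by simp
next
  case (step k) show ?case using step.IH K_Suc[of k] by (rule order_trans)
qed

lemma K_cover: assumes A: "compactin Y A" shows "\<exists>i. A \<subseteq> K i"
proof -
  have "A \<subseteq> topspace Y" using compactin_subset_topspace[OF A] .
  also have "\<dots> = (\<Union>i. K i)" using exh unfolding exhaustion_def by simp
  also have "\<dots> \<subseteq> (\<Union>i. Y interior_of K (Suc i))" using exh unfolding exhaustion_def by blast
  also have "\<dots> \<subseteq> \<Union>(range (\<lambda>i. Y interior_of K i))" by blast
  finally have cov: "A \<subseteq> \<Union>(range (\<lambda>i. Y interior_of K i))" .
  have op: "\<forall>U\<in>range (\<lambda>i. Y interior_of K i). openin Y U" by auto
  have "\<forall>\<U>. (\<forall>U\<in>\<U>. openin Y U) \<and> A \<subseteq> \<Union>\<U> \<longrightarrow> (\<exists>\<F>. finite \<F> \<and> \<F> \<subseteq> \<U> \<and> A \<subseteq> \<Union>\<F>)"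
    using A unfolding compactin_def by blast
  then have "(\<forall>U\<in>range (\<lambda>i. Y interior_of K i). openin Y U) \<and> A \<subseteq> \<Union>(range (\<lambda>i. Y interior_of K i)) \<longrightarrow>
     (\<exists>\<F>. finite \<F> \<and> \<F> \<subseteq> range (\<lambda>i. Y interior_of K i) \<and> A \<subseteq> \<Union>\<F>)" by (rule spec)
  then obtain F where F: "finite F" "F \<subseteq> range (\<lambda>i. Y interior_of K i)" "A \<subseteq> \<Union>F"
    using op cov by blast
  obtain I where I: "finite I" "F = (\<lambda>i. Y interior_of K i) ` I" using finite_subset_image[OF F(1) F(2)] by blast
  define m where "m = Max (insert 0 I)"
  have "\<Union>F \<subseteq> K m"
  proof
    fix y assume "y \<in> \<Union>F"
    then obtain i where i: "i \<in> I" "y \<in> Y interior_of K i" using I by blast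
    have "i \<le> m" unfolding m_def using I i by simp
    have "y \<in> K i" using i(2) interior_of_subset[of Y "K i"] by (rule subsetD[rotated])
    then show "y \<in> K m" using K_mono[OF \<open>i \<le> m\<close>] by (rule subsetD[rotated])
  qed
  then show ?thesis using F by blast
qed

definition idx :: "nat \<Rightarrow> nat" where
  "idx n = (LEAST i. n \<le> i \<and> {y \<in> Ys. hgt y \<le> real n + C} \<subseteq> K i)"

lemma idx_ex: "\<exists>i. n \<le> i \<and> {y \<in> Ys. hgt y \<le> real n + C} \<subseteq> K i"
proof -
  obtain i where "{y \<in> Ys. hgt y \<le> real n + C} \<subseteq> K i" using K_cover[OF compact_low] by blast
  moreover have "K i \<subseteq> K (max n i)" using K_mono[of i "max n i"] by simp
  ultimately have "n \<le> max n i \<and> {y \<in> Ys. hgt y \<le> real n + C} \<subseteq> K (max n i)" by simp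
  then show ?thesis by blast
qed

lemma idx_prop: "n \<le> idx n \<and> {y \<in> Ys. hgt y \<le> real n + C} \<subseteq> K (idx n)"
  unfolding idx_def using LeastI_ex[OF idx_ex] .

lemma idx_Suc: "idx n \<le> idx (Suc n)"
proof -
  have "{y \<in> Ys. hgt y \<le> real n + C} \<subseteq> {y \<in> Ys. hgt y \<le> real (Suc n) + C}" by auto
  then have "n \<le> idx (Suc n) \<and> {y \<in> Ys. hgt y \<le> real n + C} \<subseteq> K (idx (Suc n))"
    using idx_prop[of "Suc n"] by (meson Suc_leD order_trans)
  then show ?thesis unfolding idx_def[of n] by (rule Least_le)
qed

lemma idx_out: "y \<in> Ys - K (idx n) \<Longrightarrow> y \<in> Oset n"
  using idx_prop[of n] unfolding Oset_def by auto

definition nn :: "nat \<Rightarrow> nat" where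
  "nn i = (LEAST n. i \<le> n \<and> (\<forall>y\<in>K i. hgt y \<le> real n))"

lemma nn_ex: "\<exists>n. i \<le> n \<and> (\<forall>y\<in>K i. hgt y \<le> real n)"
proof -
  obtain R where R: "\<forall>y\<in>K i. hgt y \<le> R" using hgt_bdd[OF K_compact] by blast
  have R1: "R \<le> real (nat \<lceil>R\<rceil>)" by linarith
  have R2: "real (nat \<lceil>R\<rceil>) \<le> real (max i (nat \<lceil>R\<rceil>))" by simp
  have "\<forall>y\<in>K i. hgt y \<le> real (max i (nat \<lceil>R\<rceil>))"
  proof
    fix y assume "y \<in> K i"
    then have "hgt y \<le> R" using R by blast
    then show "hgt y \<le> real (max i (nat \<lceil>R\<rceil>))" using R1 R2 by linarith
  qed
  then have "i \<le> max i (nat \<lceil>R\<rceil>) \<and> (\<forall>y\<in>K i. hgt y \<le> real (max i (nat \<lceil>R\<rceil>)))"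
    by simp
  then show ?thesis by blast
qed

lemma nn_prop: "i \<le> nn i \<and> (\<forall>y\<in>K i. hgt y \<le> real (nn i))"
  unfolding nn_def using LeastI_ex[OF nn_ex] .

lemma nn_Suc: "nn i \<le> nn (Suc i)"
proof -
  have "i \<le> nn (Suc i) \<and> (\<forall>y\<in>K i. hgt y \<le> real (nn (Suc i)))"
    using nn_prop[of "Suc i"] K_Suc[of i] by (meson Suc_leD subsetD)
  then show ?thesis unfolding nn_def[of i] by (rule Least_le)
qed

end

context cay begin

definition EW :: "'a set \<Rightarrow> ('a + ('a \<times> 'a \<times> real) set) set" where
  "EW W = {cp g s t | g s t. g \<in> W \<and> s \<in> S \<and> t \<in> {0..1} \<and> (t = 0 \<or> g \<otimes> s \<in> W)}"

lemma EW_hgt: assumes W: "W \<in> comps n" and y: "y \<in> EW W" shows "y \<in> Ys \<and> hgt y > real n"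
proof -
  obtain g s t where r: "g \<in> W" "s \<in> S" "t \<in> {0..1}" "t = 0 \<or> g \<otimes> s \<in> W" "y = cp g s t"
    using y unfolding EW_def by blast
  have g: "g \<in> carrier G" and gB: "g \<notin> B n" using r comps_sub[OF W] by auto
  have wg: "w g > real n" using g gB unfolding B_def by auto
  have "hv g s t > real n"
  proof (cases "t = 0")
    case True then show ?thesis using wg by (simp add: hv_def)
  next
    case False
    then have "g \<otimes> s \<in> W" using r by blast
    then have "w (g \<otimes> s) > real n" using comps_sub[OF W] unfolding B_def by auto
    then show ?thesis using hv_ge_min[OF r(3), of g s] wg by linarith
  qed
  then show ?thesis using hgt_cp[OF g r(2,3)] cp_in[OF g r(2,3)] r(5) by simp
qed

lemma EW_vert: "x \<in> W \<Longrightarrow> s \<in> S \<Longrightarrow> Inl x \<in> EW W"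
  unfolding EW_def using cp_0[of x s] by (metis (mono_tags, lifting) atLeastAtMost_iff mem_Collect_eq order_refl zero_le_one)

lemma EW_Ed: "x \<in> W \<Longrightarrow> s \<in> S \<Longrightarrow> x \<otimes> s \<in> W \<Longrightarrow> Ed x s \<subseteq> EW W"
  unfolding EW_def Ed_def by blast

lemma EW_conn: assumes W: "W \<in> comps n" shows "connectedin Y (EW W)"
proof -
  obtain a where a: "a \<in> W" using comps_ne[OF W] by blast
  have ac: "a \<in> carrier G - B n" using a comps_sub[OF W] by blast
  obtain s0 where s0: "s0 \<in> S" using S_ne[OF ac] by blast
  have paths: "(a, x) \<in> (Rn n)\<^sup>* \<Longrightarrow> \<exists>P. connectedin Y P \<and> P \<subseteq> EW W \<and> Inl a \<in> P \<and> Inl x \<in> P" for x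
  proof (induction rule: rtrancl_induct)
    case base
    have "Inl a \<in> topspace Y" using vert_in[OF _ s0] ac topspace_Y by auto
    then have "connectedin Y {Inl a}" by simp
    moreover have "{Inl a} \<subseteq> EW W" using EW_vert[OF a s0] by simp
    ultimately show ?case by blast
  next
    case (step y z)
    obtain P where P: "connectedin Y P" "P \<subseteq> EW W" "Inl a \<in> P" "Inl y \<in> P" using step.IH by blast
    obtain s where s: "y \<in> carrier G" "s \<in> S" "z = y \<otimes> s" using step(2) unfolding Rn_def by blast
    have yW: "y \<in> W" using comps_closed_rtr[OF W a step(1)] .
    have zW: "z \<in> W" using comps_closed[OF W yW step(2)] .
    have c: "connectedin Y (P \<union> Ed y s)"
    proof (rule connectedin_Un[OF P(1) Ed_conn[OF s(1,2)]])
      have "Inl y \<in> Ed y s" using Ed_0[of y s] cp_0[of y s] by simp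
      then show "P \<inter> Ed y s \<noteq> {}" using P(4) by blast
    qed
    have "P \<union> Ed y s \<subseteq> EW W" using P(2) EW_Ed[OF yW s(2)] zW s(3) by blast
    moreover have "Inl z \<in> Ed y s" using Ed_1[of y s] cp_1[of y s] s(3) by simp
    ultimately show ?case using c P(3) by blast
  qed
  define UU where "UU = {P. connectedin Y P \<and> P \<subseteq> EW W \<and> Inl a \<in> P}"
  have "connectedin Y (\<Union>UU)"
  proof (rule connectedin_Union)
    show "\<And>P. P \<in> UU \<Longrightarrow> connectedin Y P" unfolding UU_def by blast
    show "\<Inter>UU \<noteq> {}" unfolding UU_def by blast
  qed
  moreover have "\<Union>UU = EW W"
  proof
    show "\<Union>UU \<subseteq> EW W" unfolding UU_def by blast
    show "EW W \<subseteq> \<Union>UU"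
    proof
      fix y assume y: "y \<in> EW W"
      obtain g s t where r: "g \<in> W" "s \<in> S" "t \<in> {0..1}" "t = 0 \<or> g \<otimes> s \<in> W" "y = cp g s t"
        using y unfolding EW_def by blast
      have gc: "g \<in> carrier G" using r comps_sub[OF W] by blast
      obtain P where P: "connectedin Y P" "P \<subseteq> EW W" "Inl a \<in> P" "Inl g \<in> P"
        using paths[OF comps_connected[OF W a r(1)]] by blast
      show "y \<in> \<Union>UU"
      proof (cases "t = 0")
        case True
        then have "y = Inl g" using r cp_0 by simp
        then show ?thesis using P unfolding UU_def by blast
      next
        case False
        then have gsW: "g \<otimes> s \<in> W" using r by blast
        have c: "connectedin Y (P \<union> Ed g s)"
        proof (rule connectedin_Un[OF P(1) Ed_conn[OF gc r(2)]])
          have "Inl g \<in> Ed g s" using Ed_0[of g s] cp_0[of g s] by simp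
          then show "P \<inter> Ed g s \<noteq> {}" using P(4) by blast
        qed
        have "P \<union> Ed g s \<subseteq> EW W" using P(2) EW_Ed[OF r(1,2) gsW] by blast
        moreover have "y \<in> Ed g s" unfolding Ed_def using r by blast
        ultimately show ?thesis using c P(3) unfolding UU_def by blast
      qed
    qed
  qed
  ultimately show ?thesis by simp
qed

end

context cayK begin

abbreviation "fends \<equiv> freudenthal_ends Y K"
abbreviation Z :: "nat \<Rightarrow> ('a + ('a \<times> 'a \<times> real) set) topology" where
  "Z i \<equiv> subtopology Y (topspace Y - K i)"

lemma fe_comp: "U \<in> fends \<Longrightarrow> U i \<in> connected_components_of (Z i)"
  unfolding freudenthal_ends_def by blast

lemma fe_dec1: "U \<in> fends \<Longrightarrow> U (Suc i) \<subseteq> U i"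
  unfolding freudenthal_ends_def by blast

lemma fe_dec: assumes U: "U \<in> fends" and ij: "i \<le> j" shows "U j \<subseteq> U i"
  using ij
proof (induction rule: dec_induct)
  case base then show ?case by simp
next
  case (step k) show ?case using fe_dec1[OF U, of k] step.IH by (rule order_trans)
qed

lemma comp_props: assumes CC: "CC \<in> connected_components_of (Z i)"
  shows "connectedin Y  CC \<and>  CC \<subseteq> Ys - K i \<and>  CC \<noteq> {}"
proof -
  have "connectedin (Z i) CC" using connectedin_connected_components_of[OF CC] .
  then have "connectedin Y  CC \<and>  CC \<subseteq> topspace Y - K i" using connectedin_subtopology by blast
  then show ?thesis using nonempty_connected_components_of[OF CC] topspace_Y by simp
qed

lemma conn_Z: "connectedin Y A \<Longrightarrow> A \<subseteq> Ys - K i \<Longrightarrow> connectedin (Z i) A"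
  using connectedin_subtopology topspace_Y by metis

definition Phit :: "(nat \<Rightarrow> ('a + ('a \<times> 'a \<times> real) set) set) \<Rightarrow> nat \<Rightarrow> 'a set" where
  "Phit U n = \<Union>{W \<in> comps n. U (idx n) \<inter> Tset W \<noteq> {}}"

lemma Phit_prop: assumes U: "U \<in> fends" shows "Phit U n \<in> comps n \<and> U (idx n) \<subseteq> Tset (Phit U n)"
proof -
  define j where "j = idx n"
  have P: "connectedin Y (U j)" "U j \<subseteq> Ys - K j" "U j \<noteq> {}" using comp_props[OF fe_comp[OF U]] by auto
  have UO: "U j \<subseteq> Oset n" using P(2) idx_out unfolding j_def by blast
  obtain y where y: "y \<in> U j" using P(3) by blast
  obtain W where W: "W \<in> comps n" "y \<in> Tset W" using Oset_T[of y n] UO y by blast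
  have sub: "U j \<subseteq> Tset W" using conn_one[OF P(1) UO W(1)] W(2) y by blast
  have "{W' \<in> comps n. U j \<inter> Tset W' \<noteq> {}} = {W}"
  proof
    show "{W' \<in> comps n. U j \<inter> Tset W' \<noteq> {}} \<subseteq> {W}"
    proof
      fix W' assume "W' \<in> {W' \<in> comps n. U j \<inter> Tset W' \<noteq> {}}"
      then obtain z where z: "W' \<in> comps n" "z \<in> U j" "z \<in> Tset W'" by blast
      have "W = W'" using T_unique[of z n W W'] z UO sub W by blast
      then show "W' \<in> {W}" by simp
    qed
    show "{W} \<subseteq> {W' \<in> comps n. U j \<inter> Tset W' \<noteq> {}}" using W y by blast
  qed
  then have "Phit U n = W" unfolding Phit_def j_def by simp
  then show ?thesis using W sub unfolding j_def by simp
qed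

lemma Phit_O: assumes U: "U \<in> fends" shows "U (idx n) \<subseteq> Oset n"
  using comp_props[OF fe_comp[OF U]] idx_out by blast

lemma Phit_gends: assumes U: "U \<in> fends" shows "Phit U \<in> gends"
  unfolding gends_def
proof (intro CollectI allI conjI)
  fix n
  show "Phit U n \<in> comps n" using Phit_prop[OF U] by blast
  define W where "W = Phit U n"
  define W' where "W' = Phit U (Suc n)"
  have W: "W \<in> comps n" "U (idx n) \<subseteq> Tset W" using Phit_prop[OF U] W_def by auto
  have W': "W' \<in> comps (Suc n)" "U (idx (Suc n)) \<subseteq> Tset W'" using Phit_prop[OF U] W'_def by auto
  obtain y where y: "y \<in> U (idx (Suc n))" using comp_props[OF fe_comp[OF U]] by blast
  have y2: "y \<in> U (idx n)" using fe_dec[OF U idx_Suc[of n]] y by blast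
  obtain g s t where r: "g \<in> W'" "s \<in> S" "t \<in> {0..1}" "y = cp g s t" using W'(2) y unfolding Tset_def by blast
  have g: "g \<in> carrier G" using r comps_sub[OF W'(1)] by blast
  have "y \<in> Oset (Suc n)" using Phit_O[OF U] y by blast
  then have "hv g s t > real (Suc n) + C" using hgt_cp[OF g r(2,3)] r unfolding Oset_def by simp
  then have h: "hv g s t > real n + C" by simp
  have "g \<in> W" using Tmem[OF g r(2,3) h W(1)] W(2) y2 r(4) by blast
  then have "W' \<inter> W \<noteq> {}" using r by blast
  then have "W' \<subseteq> W" using comps_mono_unique[of n "Suc n" W' W] W'(1) W(1) by simp
  then show "Phit U (Suc n) \<subseteq> Phit U n" using W_def W'_def by simp
qed

lemma Phit_EW: assumes U: "U \<in> fends" shows "U (idx n) \<subseteq> EW (Phit U n)"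
proof
  fix y assume y: "y \<in> U (idx n)"
  define W where "W = Phit U n"
  have W: "W \<in> comps n" "U (idx n) \<subseteq> Tset W" using Phit_prop[OF U] W_def by auto
  obtain g s t where r: "g \<in> W" "s \<in> S" "t \<in> {0..1}" "y = cp g s t" using W(2) y unfolding Tset_def by blast
  have g: "g \<in> carrier G" using r comps_sub[OF W(1)] by blast
  have "y \<in> Oset n" using Phit_O[OF U] y by blast
  then have h: "hv g s t > real n + C" using hgt_cp[OF g r(2,3)] r unfolding Oset_def by simp
  have "g \<otimes> s \<in> W" using comps_closed[OF W(1) r(1) hv_big_Rn[OF g r(2,3) h]] .
  then show "y \<in> EW (Phit U n)" unfolding EW_def W_def[symmetric] using r by blast
qed

lemma Phit_inj: "inj_on Phit fends"
proof (rule inj_onI)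
  fix U U' assume U: "U \<in> fends" and U': "U' \<in> fends" and eq: "Phit U = Phit U'"
  show "U = U'"
  proof (rule ext)
    fix i
    obtain R where R: "\<forall>y\<in>K i. hgt y \<le> R" using hgt_bdd[OF K_compact] by blast
    define n where "n = max i (nat \<lceil>R\<rceil>)"
    have Rn: "R \<le> real n" unfolding n_def by linarith
    have "n \<le> idx n" using idx_prop by blast
    then have ij: "i \<le> idx n" unfolding n_def by simp
    define W where "W = Phit U n"
    have W: "W \<in> comps n" using Phit_prop[OF U] W_def by blast
    have s1: "U (idx n) \<subseteq> EW W" using Phit_EW[OF U] W_def by simp
    have s2: "U' (idx n) \<subseteq> EW W" using Phit_EW[OF U'] W_def eq by simp
    have EWsub: "EW W \<subseteq> Ys - K i"
    proof
      fix y assume y: "y \<in> EW W"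
      have "y \<in> Ys \<and> hgt y > real n" using EW_hgt[OF W y] .
      then show "y \<in> Ys - K i" using R Rn by force
    qed
    have cZ: "connectedin (Z i) (EW W)" using conn_Z[OF EW_conn[OF W] EWsub] .
    have ne1: "U (idx n) \<noteq> {}" using comp_props[OF fe_comp[OF U]] by blast
    have ne2: "U' (idx n) \<noteq> {}" using comp_props[OF fe_comp[OF U']] by blast
    have "\<not> disjnt (U i) (EW W)" using ne1 s1 fe_dec[OF U ij] unfolding disjnt_def by blast
    then have A: "EW W \<subseteq> U i" using connected_components_of_maximal[OF fe_comp[OF U] cZ] by blast
    have "\<not> disjnt (U' i) (EW W)" using ne2 s2 fe_dec[OF U' ij] unfolding disjnt_def by blast
    then have A': "EW W \<subseteq> U' i" using connected_components_of_maximal[OF fe_comp[OF U'] cZ] by blast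
    have "EW W \<noteq> {}" using ne1 s1 by blast
    then have "\<not> disjnt (U i) (U' i)" using A A' unfolding disjnt_def by blast
    then show "U i = U' i" using connected_components_of_disjoint[OF fe_comp[OF U] fe_comp[OF U']] by blast
  qed
qed

lemma fends_lepoll: "fends \<lesssim> gends"
  unfolding lepoll_def using Phit_inj Phit_gends by blast


definition Psit :: "(nat \<Rightarrow> 'a set) \<Rightarrow> nat \<Rightarrow> ('a + ('a \<times> 'a \<times> real) set) set" where
  "Psit W i = connected_component_of_set (Z i) (Inl (xs W (nn i)))"

lemma gends_S: assumes W: "W \<in> gends" shows "\<exists>s0. s0 \<in> S"
proof -
  obtain x where "x \<in> W 0" using comps_ne[OF gends_comps[OF W]] by blast
  then have "x \<in> carrier G - B 0" using comps_sub[OF gends_comps[OF W]] by blast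
  then show ?thesis using S_ne by blast
qed

lemma xs_fact: "W \<in> gends \<Longrightarrow> xs W m \<in> carrier G - B m"
proof -
  assume W: "W \<in> gends"
  have "xs W m \<in> W m" using xs_in[OF W] .
  then show ?thesis using comps_sub[OF gends_comps[OF W]] by (rule subsetD[rotated])
qed

lemma vert_notK: assumes W: "W \<in> gends" shows "Inl (xs W (nn i)) \<in> Ys - K i"
proof -
  obtain s0 where s0: "s0 \<in> S" using gends_S[OF W] by blast
  have x: "xs W (nn i) \<in> carrier G - B (nn i)" using xs_fact[OF W] .
  then have wx: "w (xs W (nn i)) > real (nn i)" unfolding B_def by auto
  have h: "hgt (Inl (xs W (nn i))) = w (xs W (nn i))" using hgt_vert[OF _ s0] x by blast
  have "Inl (xs W (nn i)) \<notin> K i"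
  proof
    assume "Inl (xs W (nn i)) \<in> K i"
    then have "hgt (Inl (xs W (nn i))) \<le> real (nn i)" using nn_prop[of i] by blast
    then show False using h wx by linarith
  qed
  then show ?thesis using vert_in[OF _ s0] x by blast
qed

lemma top_Z: "topspace (Z i) = Ys - K i"
  by (auto simp: topspace_Y)

lemma vert_top: "W \<in> gends \<Longrightarrow> Inl (xs W (nn i)) \<in> topspace (Z i)"
  unfolding top_Z by (rule vert_notK)

lemma Psit_comp: "W \<in> gends \<Longrightarrow> Psit W i \<in> connected_components_of (Z i)"
proof -
  assume W: "W \<in> gends"
  have "Inl (xs W (nn i)) \<in> topspace (Z i)" using vert_top[OF W] .
  then show ?thesis unfolding Psit_def by (simp only: connected_component_in_connected_components_of)
qed

lemma Psit_self: "W \<in> gends \<Longrightarrow> Inl (xs W (nn i)) \<in> Psit W i"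
proof -
  assume W: "W \<in> gends"
  have "connected_component_of (Z i) (Inl (xs W (nn i))) (Inl (xs W (nn i)))"
    using vert_top[OF W] by (simp only: connected_component_of_refl)
  then show ?thesis unfolding Psit_def by simp
qed

lemma EW_Z: assumes W: "W \<in> gends" shows "EW (W (nn i)) \<subseteq> Ys - K i"
proof
  fix y assume y: "y \<in> EW (W (nn i))"
  have "y \<in> Ys \<and> hgt y > real (nn i)" using EW_hgt[OF gends_comps[OF W] y] .
  then show "y \<in> Ys - K i" using nn_prop[of i] by force
qed

lemma Psit_EW: assumes W: "W \<in> gends" shows "EW (W (nn i)) \<subseteq> Psit W i"
proof -
  obtain s0 where s0: "s0 \<in> S" using gends_S[OF W] by blast
  have c: "connectedin (Z i) (EW (W (nn i)))" using conn_Z[OF EW_conn[OF gends_comps[OF W]] EW_Z[OF W]] .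
  have "Inl (xs W (nn i)) \<in> EW (W (nn i))" using EW_vert[OF xs_in[OF W] s0] .
  then show ?thesis unfolding Psit_def using connected_component_of_maximal[OF c] by blast
qed

lemma Psit_fends: assumes W: "W \<in> gends" shows "Psit W \<in> fends"
  unfolding freudenthal_ends_def
proof (intro CollectI allI conjI)
  fix i
  show "Psit W i \<in> connected_components_of (Z i)" using Psit_comp[OF W] .
  obtain s0 where s0: "s0 \<in> S" using gends_S[OF W] by blast
  define b where "b = xs W (nn (Suc i))"
  have "b \<in> W (nn (Suc i))" using xs_in[OF W] b_def by simp
  then have "b \<in> W (nn i)" using gends_dec[OF W nn_Suc[of i]] by blast
  then have "Inl b \<in> EW (W (nn i))" using EW_vert[OF _ s0] by blast
  then have b1: "Inl b \<in> Psit W i" using Psit_EW[OF W] by blast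
  have b2: "Inl b \<in> Psit W (Suc i)" using Psit_self[OF W] b_def by simp
  have P: "connectedin Y (Psit W (Suc i)) \<and> Psit W (Suc i) \<subseteq> Ys - K (Suc i)"
    using comp_props[OF Psit_comp[OF W]] by blast
  then have "Psit W (Suc i) \<subseteq> Ys - K i" using K_Suc[of i] by blast
  then have c: "connectedin (Z i) (Psit W (Suc i))" using conn_Z P by blast
  have "\<not> disjnt (Psit W i) (Psit W (Suc i))" using b1 b2 unfolding disjnt_def by blast
  then show "Psit W (Suc i) \<subseteq> Psit W i" using connected_components_of_maximal[OF Psit_comp[OF W] c] by blast
qed

lemma Psit_inj: "inj_on Psit gends"
proof (rule inj_onI)
  fix W W' assume W: "W \<in> gends" and W': "W' \<in> gends" and eq: "Psit W = Psit W'"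
  show "W = W'"
  proof (rule ccontr)
    assume "W \<noteq> W'"
    then obtain n where ne: "W n \<noteq> W' n" by blast
    obtain s0 where s0: "s0 \<in> S" using gends_S[OF W] by blast
    define i where "i = idx n"
    have ni: "n \<le> nn i" using idx_prop[of n] nn_prop[of i] unfolding i_def by linarith
    have sub: "Psit V i \<subseteq> Tset (V n)" if V: "V \<in> gends" for V
    proof -
      have P: "connectedin Y (Psit V i)" "Psit V i \<subseteq> Ys - K i" using comp_props[OF Psit_comp[OF V]] by auto
      have PO: "Psit V i \<subseteq> Oset n" using P(2) idx_out unfolding i_def by blast
      have "xs V (nn i) \<in> V n" using xs_in_le[OF V ni] .
      then have "cp (xs V (nn i)) s0 0 \<in> Tset (V n)" unfolding Tset_def using s0 by force
      then have "Inl (xs V (nn i)) \<in> Tset (V n)" using cp_0 by simp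
      then have "Psit V i \<inter> Tset (V n) \<noteq> {}" using Psit_self[OF V] by blast
      then show ?thesis using conn_one[OF P(1) PO gends_comps[OF V]] by blast
    qed
    have y: "Inl (xs W (nn i)) \<in> Psit W i" using Psit_self[OF W] .
    then have "Inl (xs W (nn i)) \<in> Tset (W n)" "Inl (xs W (nn i)) \<in> Tset (W' n)"
      using sub[OF W] sub[OF W'] eq by auto
    moreover have "Inl (xs W (nn i)) \<in> Oset n"
      using y comp_props[OF Psit_comp[OF W]] idx_out unfolding i_def by blast
    ultimately have "W n = W' n" using T_unique gends_comps[OF W] gends_comps[OF W'] by blast
    then show False using ne by simp
  qed
qed

lemma gends_lepoll_f: "gends \<lesssim> fends"
  unfolding lepoll_def using Psit_inj Psit_fends by blast

lemma fends_eqpoll: "fends \<approx> gends"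
  using lepoll_antisym[OF fends_lepoll gends_lepoll_f] .

lemma main: "rem \<approx> fends"
  using eqpoll_trans[OF rem_eqpoll eqpoll_sym[OF fends_eqpoll]] .

end

theorem proposition5p4:
  fixes G :: "('a, 'b) monoid_scheme" and S :: "'a set" and d :: "'a \<Rightarrow> 'a \<Rightarrow> real"
    and K :: "nat \<Rightarrow> ('a + ('a \<times> 'a \<times> real) set) set"
  assumes "group G"
    and "finite S" and "S \<subseteq> carrier G" and "\<forall>s\<in>S. inv\<^bsub>G\<^esub> s \<in> S"
    and "generate G S = carrier G"
    and "proper_left_invariant_metric G d"
    and "exhaustion (cayley_top G S) K"
  shows "CF_remainder (carrier G) d \<approx> freudenthal_ends (cayley_top G S) K"
proof -
  interpret cayK G S d K
    by (intro cayK.intro cay.intro cay_axioms.intro cayK_axioms.intro) (use assms in auto)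
  show ?thesis using main .
qed


end
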